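(* Let $n\ge2$, $d\ge2$, $0\ne\mathcal C=[c_{j_1,\ldots,j_d}]\in\otimes^d\mathbb{R}^n$, $c_{\min}=\min c_{j_1,\ldots,j_d}$, $c=\max|c_{j_1,\ldots,j_d}|$, and $\mathbf p_1,\ldots,\mathbf p_d\in\Delta^n$. Let $\mathcal C(\mathbf x_1,\ldots,\mathbf x_d)$ be the tensor with entries $c_{j_1,\ldots,j_d}-x_{j_1,1}-\cdots-x_{j_d,d}$, $\hat{\mathrm D}=\{(\mathbf x_1,\ldots,\mathbf x_d)\in(\mathbb{R}^n)^d:\mathcal C(\mathbf x_1,\ldots,\mathbf x_d)>0\}$, $\mathrm D=\{(\mathbf x_i)\in\hat{\mathrm D}:\mathbf 1_n^\top\mathbf x_1=\cdots=\mathbf 1_n^\top\mathbf x_d\}$. Then: (a) $\tau(\mathcal C,P)\ge c_{\min}$. (b) $\tau(\mathcal C,P)=\max_{\mathcal C(\mathbf x_1,\ldots,\mathbf x_d)\ge0}\sum_i\mathbf p_i^\top\mathbf x_i=\sup_{\hat{\mathrm D}}\sum_i\mathbf p_i^\top\mathbf x_i=\sup_{\mathrm D}\sum_i\mathbf p_i^\top\mathbf x_i$. (c) If the $\mathbf p_i$ are entrywise positive and $\mathcal C(\mathbf x_1,\ldots,\mathbf x_d)\ge0$, $\sum_i\mathbf p_i^\top\mathbf x_i\ge c_{\min}$, $\mathbf 1_n^\top\mathbf x_1=\cdots=\mathbf 1_n^\top\mathbf x_d$, then $\sqrt{\sum_i\|\mathbf x_i\|^2}<\frac{2c\sqrt n}{\prod_{i=1}^d\min_jp_{j,i}}$.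 (d) With $t=\frac{(-1+c_{\min})n}{d}$ and $\mathbf x_{i,0}=\frac tn\mathbf 1_n$, $(\mathbf x_{1,0},\ldots,\mathbf x_{d,0})\in\mathrm D$. (e) With positive $\mathbf p_i$ and $r^2=\frac{(9c^2+1)n}{(\prod_i\min_jp_{j,i})^2}$, the open ball $\{\sum_i\|\mathbf x_i-\mathbf x_{i,0}\|^2<r^2\}$ contains all $(\mathbf x_1,\ldots,\mathbf x_d)$ satisfying the conditions in (c). (f) With $\mathrm D_1=\mathrm D\cap\{\sum_i\|\mathbf x_i-\mathbf x_{i,0}\|^2<r^2\}$, every boundary point of $\mathrm D_1$ is at Euclidean distance at least $\frac1{\sqrt d}$ from $(\mathbf x_{1,0},\ldots,\mathbf x_{d,0})$. (g) $\hat\beta=-\sum_{j_1,\ldots,j_d=1}^n\log(c_{j_1,\ldots,j_d}-x_{j_1,1}-\cdots-x_{j_d,d})-\log(r^2-\sum_i\|\mathbf x_i-\mathbf x_{i,0}\|^2)+\log r^2$ is a barrier function for $\mathrm D_1$ with $\theta(\hat\beta)\le n^d+1$.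
   Context: $\Delta^n$: probability vectors in $\mathbb{R}^n$. $\tau(\mathcal C,P)=\min\{\langle\mathcal C,\mathcal V\rangle:\mathcal V\ge0,\ \text{the }i\text{-th marginal of }\mathcal V\text{ is }\mathbf p_i\ \forall i\}$, where the $i$-th marginal is the vector of sums of entries over all indices except the $i$-th. A convex $f\in C^3(\mathrm D)$ on a convex domain is $a$-self-concordant if $|\partial^3f(\mathbf x)[\mathbf u,\mathbf u,\mathbf u]|\le2a^{-1/2}(\mathbf u^\top\partial^2f(\mathbf x)\mathbf u)^{3/2}$ for all $\mathbf x,\mathbf u$; strongly so if $f\to\infty$ at $\partial\mathrm D$; $\theta(f)=\sup_{\mathbf x}\inf\{\lambda^2:|\nabla f(\mathbf x)^\top\mathbf u|^2\le\lambda^2a\,\mathbf u^\top\partial^2f(\mathbf x)\mathbf u\ \forall\mathbf u\}$; a barrier is strongly self-concordant with finite $\theta$. *)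

theory Defs
  imports "HOL-Analysis.Analysis"
begin

text \<open>Index conventions: the tensor index set is the finite type of multi-indices
  'd \<Rightarrow> 'n (n = CARD('n), d = CARD('d)); a tuple (x_1,...,x_d) of vectors in R^n is
  an element x :: real^'n^'d, with x_{j,i} = x$i$j.\<close>

definition prob_vec :: "real^'n::finite \<Rightarrow> bool" where
  "prob_vec q \<longleftrightarrow> (\<forall>j. 0 \<le> q$j) \<and> (\<Sum>j\<in>UNIV. q$j) = 1"

definition marginal :: "(('d::finite \<Rightarrow> 'n::finite) \<Rightarrow> real) \<Rightarrow> 'd \<Rightarrow> real^'n" where
  "marginal V i = (\<chi> j. \<Sum>J\<in>{J. J i = j}. V J)"

definition tau :: "(('d::finite \<Rightarrow> 'n::finite) \<Rightarrow> real) \<Rightarrow> real^'n^'d \<Rightarrow> real" where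
  "tau C P = Inf {(\<Sum>J\<in>UNIV. C J * V J) | V. (\<forall>J. 0 \<le> V J) \<and> (\<forall>i. marginal V i = P$i)}"

definition Cx :: "(('d::finite \<Rightarrow> 'n::finite) \<Rightarrow> real) \<Rightarrow> real^'n^'d \<Rightarrow> ('d \<Rightarrow> 'n) \<Rightarrow> real" where
  "Cx C x J = C J - (\<Sum>i\<in>UNIV. x$i$(J i))"

definition objective :: "real^'n::finite^'d::finite \<Rightarrow> real^'n^'d \<Rightarrow> real" where
  "objective P x = (\<Sum>i\<in>UNIV. P$i \<bullet> x$i)"

definition rowsum :: "real^'n::finite^'d::finite \<Rightarrow> 'd \<Rightarrow> real" where
  "rowsum x i = (\<Sum>j\<in>UNIV. x$i$j)"

definition Dhat :: "(('d::finite \<Rightarrow> 'n::finite) \<Rightarrow> real) \<Rightarrow> (real^'n^'d) set" where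
  "Dhat C = {x. \<forall>J. 0 < Cx C x J}"

definition Dom :: "(('d::finite \<Rightarrow> 'n::finite) \<Rightarrow> real) \<Rightarrow> (real^'n^'d) set" where
  "Dom C = {x \<in> Dhat C. \<forall>i i'. rowsum x i = rowsum x i'}"

definition cmin :: "(('d::finite \<Rightarrow> 'n::finite) \<Rightarrow> real) \<Rightarrow> real" where
  "cmin C = Min (range C)"

definition cmax :: "(('d::finite \<Rightarrow> 'n::finite) \<Rightarrow> real) \<Rightarrow> real" where
  "cmax C = Max (range (\<lambda>J. \<bar>C J\<bar>))"

definition pmin :: "real^'n::finite^'d::finite \<Rightarrow> real" where
  "pmin P = (\<Prod>i\<in>UNIV. Min (range (\<lambda>j. P$i$j)))"

definition x0 :: "(('d::finite \<Rightarrow> 'n::finite) \<Rightarrow> real) \<Rightarrow> real^'n^'d" where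
  "x0 C = (let t = (-1 + cmin C) * real CARD('n) / real CARD('d)
           in (\<chi> i j. t / real CARD('n)))"

definition rsq :: "(('d::finite \<Rightarrow> 'n::finite) \<Rightarrow> real) \<Rightarrow> real^'n^'d \<Rightarrow> real" where
  "rsq C P = (9 * (cmax C)^2 + 1) * real CARD('n) / (pmin P)^2"

definition D1 :: "(('d::finite \<Rightarrow> 'n::finite) \<Rightarrow> real) \<Rightarrow> real^'n^'d \<Rightarrow> (real^'n^'d) set" where
  "D1 C P = Dom C \<inter> {x. (\<Sum>i\<in>UNIV. (norm (x$i - x0 C $i))^2) < rsq C P}"

definition betahat :: "(('d::finite \<Rightarrow> 'n::finite) \<Rightarrow> real) \<Rightarrow> real^'n^'d \<Rightarrow> real^'n^'d \<Rightarrow> real" where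
  "betahat C P x = - (\<Sum>J\<in>UNIV. ln (Cx C x J))
       - ln (rsq C P - (\<Sum>i\<in>UNIV. (norm (x$i - x0 C $i))^2)) + ln (rsq C P)"

text \<open>A domain S is a convex set that is open in its affine hull; admissible directions u
  are those of the linear space parallel to the affine hull of S.\<close>

definition dirs :: "'a::euclidean_space set \<Rightarrow> 'a set" where
  "dirs S = span {y - x | x y. x \<in> S \<and> y \<in> S}"

text \<open>f is C^3 on S (derivatives taken within S, i.e. relative to its affine hull).\<close>
definition C3_on :: "'a::euclidean_space set \<Rightarrow> ('a \<Rightarrow> real) \<Rightarrow> bool" where
  "C3_on S f \<longleftrightarrow> (\<exists>(f1::'a \<Rightarrow> ('a \<Rightarrow>\<^sub>L real)) (f2::'a \<Rightarrow> ('a \<Rightarrow>\<^sub>L 'a \<Rightarrow>\<^sub>L real))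
        (f3::'a \<Rightarrow> ('a \<Rightarrow>\<^sub>L 'a \<Rightarrow>\<^sub>L 'a \<Rightarrow>\<^sub>L real)).
      (\<forall>x\<in>S. (f has_derivative blinfun_apply (f1 x)) (at x within S)
           \<and> (f1 has_derivative blinfun_apply (f2 x)) (at x within S)
           \<and> (f2 has_derivative blinfun_apply (f3 x)) (at x within S))
      \<and> continuous_on S f3)"

text \<open>k-th derivative of f at x in direction u, i.e. the diagonal form
  \<partial>^k f(x)[u,...,u], as the k-th derivative of t \<mapsto> f(x + t u) at 0.\<close>
definition dderiv :: "nat \<Rightarrow> ('a::euclidean_space \<Rightarrow> real) \<Rightarrow> 'a \<Rightarrow> 'a \<Rightarrow> real" where
  "dderiv k f x u = (deriv ^^ k) (\<lambda>t. f (x + t *\<^sub>R u)) 0"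

definition self_concordant :: "real \<Rightarrow> ('a::euclidean_space \<Rightarrow> real) \<Rightarrow> 'a set \<Rightarrow> bool" where
  "self_concordant a f S \<longleftrightarrow> 0 < a \<and> convex S \<and> openin (top_of_set (affine hull S)) S
     \<and> convex_on S f \<and> C3_on S f
     \<and> (\<forall>x\<in>S. \<forall>u\<in>dirs S.
          \<bar>dderiv 3 f x u\<bar> \<le> 2 * a powr (-1/2) * (dderiv 2 f x u) powr (3/2))"

definition strongly_self_concordant :: "real \<Rightarrow> ('a::euclidean_space \<Rightarrow> real) \<Rightarrow> 'a set \<Rightarrow> bool" where
  "strongly_self_concordant a f S \<longleftrightarrow> self_concordant a f S
     \<and> (\<forall>y\<in>rel_frontier S. filterlim f at_top (at y within S))"

definition theta :: "real \<Rightarrow> ('a::euclidean_space \<Rightarrow> real) \<Rightarrow> 'a set \<Rightarrow> ereal" where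
  "theta a f S = (SUP x\<in>S. Inf {ereal s | s. 0 \<le> s \<and>
       (\<forall>u\<in>dirs S. (dderiv 1 f x u)^2 \<le> s * a * dderiv 2 f x u)})"

definition barrier :: "real \<Rightarrow> ('a::euclidean_space \<Rightarrow> real) \<Rightarrow> 'a set \<Rightarrow> bool" where
  "barrier a f S \<longleftrightarrow> strongly_self_concordant a f S \<and> theta a f S < \<infinity>"

end

theory Submission
  imports Defs "HOL-Library.FuncSet"
begin

definition AJ :: "('d::finite \<Rightarrow> 'n::finite) \<Rightarrow> real^'n^'d" where
  "AJ J = (\<chi> i j. if J i = j then 1 else 0)"

lemma inner_AJ: "inner x (AJ J) = (\<Sum>i\<in>UNIV. x$i$(J i))"
  by (simp add: AJ_def inner_vec_def if_distrib cong: if_cong)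

lemma Cx_AJ: "Cx C x J = C J - inner x (AJ J)"
  by (simp add: Cx_def inner_AJ)

lemma objective_inner: "objective P y = inner P y"
  by (simp add: objective_def inner_vec_def)

lemma marg_sum: "(\<Sum>J\<in>UNIV. V J *\<^sub>R AJ J) = (\<chi> i. marginal V i)"
proof -
  have "(\<Sum>J\<in>UNIV. V J *\<^sub>R AJ J) $ i $ j = marginal V i $ j" for i j
  proof -
    have "(\<Sum>J\<in>UNIV. V J *\<^sub>R AJ J) $ i $ j = (\<Sum>J\<in>UNIV. if J i = j then V J else 0)"
      by (simp add: sum_component AJ_def if_distrib cong: if_cong)
    also have "\<dots> = (\<Sum>J\<in>{J. J i = j}. V J)"
      by (simp add: sum.If_cases)
    finally show ?thesis by (simp add: marginal_def)
  qed
  then show ?thesis by (simp add: vec_eq_iff)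
qed

lemma marg_eq_iff: "(\<forall>i. marginal V i = P$i) \<longleftrightarrow> (\<Sum>J\<in>UNIV. V J *\<^sub>R AJ J) = P"
  by (simp add: marg_sum vec_eq_iff)

lemma prod_feasible:
  fixes P :: "real^'n::finite^'d::finite"
  assumes "\<forall>i. prob_vec (P$i)"
  shows "marginal (\<lambda>J. \<Prod>k\<in>UNIV. P$k$(J k)) i = P$i"
proof -
  have "marginal (\<lambda>J. \<Prod>k\<in>UNIV. P$k$(J k)) i $ j = P$i$j" for j
  proof -
    define B where "B = (\<lambda>k::'d. if k = i then {j} else (UNIV::'n set))"
    have PiE: "Pi\<^sub>E UNIV B = {J. J i = j}"
      by (auto simp: B_def PiE_def Pi_def extensional_def split: if_splits)
    have "(\<Prod>k\<in>UNIV. sum (\<lambda>jj. P$k$jj) (B k)) = (\<Sum>g\<in>Pi\<^sub>E UNIV B. \<Prod>k\<in>UNIV. P$k$(g k))"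
      by (rule prod_sum_PiE) auto
    moreover have "(\<Prod>k\<in>UNIV. sum (\<lambda>jj. P$k$jj) (B k)) = P$i$j"
    proof -
      have "(\<Prod>k\<in>UNIV. sum (\<lambda>jj. P$k$jj) (B k)) = (\<Prod>k\<in>UNIV. if k = i then P$i$j else 1)"
        using assms by (intro prod.cong) (auto simp: B_def prob_vec_def)
      also have "\<dots> = P$i$j" by (simp add: prod.delta)
      finally show ?thesis .
    qed
    ultimately show ?thesis by (simp add: marginal_def PiE)
  qed
  then show ?thesis by (simp add: vec_eq_iff)
qed

lemma sumV_1:
  fixes P :: "real^'n::finite^'d::finite"
  assumes "\<forall>i. prob_vec (P$i)" "\<forall>i. marginal V i = P$i"
  shows "(\<Sum>J\<in>UNIV. V J) = 1"
proof -
  obtain i :: 'd where True by auto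
  have "(\<Sum>J\<in>UNIV. V J) = (\<Sum>j\<in>UNIV. \<Sum>J\<in>{J. J i = j}. V J)"
    using sum.group[of "UNIV::('d\<Rightarrow>'n) set" "UNIV::'n set" "\<lambda>J. J i" V] by simp
  also have "\<dots> = (\<Sum>j\<in>UNIV. P$i$j)"
    using assms(2) by (simp add: marginal_def vec_eq_iff)
  also have "\<dots> = 1" using assms(1) by (simp add: prob_vec_def)
  finally show ?thesis .
qed

lemma sum_in_cch:
  assumes "finite I" "\<And>k. k \<in> I \<Longrightarrow> x k \<in> convex_cone hull S"
  shows "(\<Sum>k\<in>I. x k) \<in> convex_cone hull S"
  using assms by (induction I rule: finite_induct)
    (auto intro: convex_cone_hull_add convex_cone_hull_contains_0)

lemma farkas_gen:
  fixes gen :: "'k::finite \<Rightarrow> 'a::euclidean_space"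
  assumes "\<not> (\<exists>l. (\<forall>k. 0 \<le> l k) \<and> z = (\<Sum>k\<in>UNIV. l k *\<^sub>R gen k))"
  shows "\<exists>a. inner a z < 0 \<and> (\<forall>k. 0 \<le> inner a (gen k))"
proof -
  define K where "K = {(\<Sum>k\<in>UNIV. l k *\<^sub>R gen k) | l. \<forall>k. 0 \<le> l k}"
  have sub1: "K \<subseteq> convex_cone hull (range gen)"
  proof
    fix x assume "x \<in> K"
    then obtain l where l: "\<forall>k. 0 \<le> l k" "x = (\<Sum>k\<in>UNIV. l k *\<^sub>R gen k)"
      unfolding K_def by blast
    show "x \<in> convex_cone hull (range gen)"
      unfolding l(2) using l(1)
      by (intro sum_in_cch convex_cone_hull_mul hull_inc) auto
  qed
  have cc: "convex_cone K"
    unfolding convex_cone_iff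
  proof (intro conjI ballI allI impI)
    show "0 \<in> K" unfolding K_def by (rule CollectI, rule exI[of _ "\<lambda>_. 0"]) simp
  next
    fix x y assume "x \<in> K" "y \<in> K"
    then obtain l m where "\<forall>k. 0 \<le> l k" "x = (\<Sum>k\<in>UNIV. l k *\<^sub>R gen k)"
       "\<forall>k. 0 \<le> m k" "y = (\<Sum>k\<in>UNIV. m k *\<^sub>R gen k)"
      unfolding K_def by blast
    then show "x + y \<in> K" unfolding K_def
      by (intro CollectI exI[of _ "\<lambda>k. l k + m k"]) (auto simp: sum.distrib scaleR_add_left)
  next
    fix x and c :: real assume "x \<in> K" "0 \<le> c"
    then obtain l where "\<forall>k. 0 \<le> l k" "x = (\<Sum>k\<in>UNIV. l k *\<^sub>R gen k)"
      unfolding K_def by blast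
    then show "c *\<^sub>R x \<in> K" using \<open>0 \<le> c\<close> unfolding K_def
      by (intro CollectI exI[of _ "\<lambda>k. c * l k"]) (auto simp: scaleR_sum_right)
  qed
  have gen_in: "gen k \<in> K" for k
    unfolding K_def
    by (intro CollectI exI[of _ "\<lambda>k'. if k' = k then 1 else 0"])
       (simp add: if_distrib[where f="\<lambda>c. c *\<^sub>R gen _"] cong: if_cong)
  have sub2: "convex_cone hull (range gen) \<subseteq> K"
    by (rule hull_minimal) (use cc gen_in in auto)
  have KK: "K = convex_cone hull (range gen)" using sub1 sub2 by auto
  have closed: "closed K" unfolding KK by (rule closed_convex_cone_hull) simp
  have convex: "convex K" using cc by (simp add: convex_cone_def)
  have "z \<notin> K" using assms unfolding K_def by blast
  from separating_hyperplane_closed_point[OF convex closed this]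
  obtain a b where ab: "inner a z < b" "\<forall>x\<in>K. inner a x > b" by blast
  have "0 \<in> K" using cc by (simp add: convex_cone_iff)
  with ab have b0: "b < 0" by fastforce
  have "0 \<le> inner a (gen k)" for k
  proof (rule ccontr)
    assume "\<not> 0 \<le> inner a (gen k)"
    then have neg: "inner a (gen k) < 0" by simp
    define t where "t = b / inner a (gen k)"
    have t0: "0 \<le> t" using neg b0 by (simp add: t_def divide_nonpos_neg)
    have "t *\<^sub>R gen k \<in> K" using cc gen_in t0 by (simp add: convex_cone_iff)
    with ab have "inner a (t *\<^sub>R gen k) > b" by blast
    moreover have "inner a (t *\<^sub>R gen k) = b" using neg by (simp add: t_def)
    ultimately show False by simp
  qed
  with ab b0 show ?thesis by (intro exI[of _ a]) auto
qed

lemma sum_UNIV_option: "(\<Sum>k\<in>(UNIV::'a::finite option set). f k) = f None + (\<Sum>J\<in>UNIV. f (Some J))"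
proof -
  have u: "(UNIV::'a option set) = insert None (range Some)" by (rule UNIV_option_conv)
  have "sum f (insert None (range Some)) = f None + sum f (range Some)"
    by (rule sum.insert) auto
  also have "sum f (range Some) = (\<Sum>J\<in>UNIV. f (Some J))"
    by (subst sum.reindex) auto
  finally show ?thesis unfolding u[symmetric] .
qed

lemma cmin_le: "cmin C \<le> C J"
  unfolding cmin_def by (rule Min_le) auto

lemma sumV_marg:
  fixes V :: "('d::finite \<Rightarrow> 'n::finite) \<Rightarrow> real"
  shows "(\<Sum>J\<in>UNIV. V J) = (\<Sum>j\<in>UNIV. marginal V i $ j)"
proof -
  have "(\<Sum>J\<in>UNIV. V J) = (\<Sum>j\<in>UNIV. \<Sum>J\<in>{J. J i = j}. V J)"
    using sum.group[of "UNIV::('d\<Rightarrow>'n) set" "UNIV::'n set" "\<lambda>J. J i" V] by simp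
  then show ?thesis by (simp add: marginal_def)
qed

lemma tau_lower:
  fixes P :: "real^'n::finite^'d::finite"
  assumes "\<forall>i. prob_vec (P$i)" "\<forall>J. 0 \<le> V J" "\<forall>i. marginal V i = P$i"
  shows "tau C P \<le> (\<Sum>J\<in>UNIV. C J * V J)"
  unfolding tau_def
proof (rule cInf_lower)
  show "(\<Sum>J\<in>UNIV. C J * V J) \<in> {\<Sum>J\<in>UNIV. C J * V J |V. (\<forall>J. 0 \<le> V J) \<and> (\<forall>i. marginal V i = P $ i)}"
    using assms by blast
  show "bdd_below {\<Sum>J\<in>UNIV. C J * V J |V. (\<forall>J. 0 \<le> V J) \<and> (\<forall>i. marginal V i = P $ i)}"
  proof (rule bdd_belowI[of _ "cmin C"], clarify)
    fix W :: "('d \<Rightarrow> 'n) \<Rightarrow> real" assume W: "\<forall>J. 0 \<le> W J" "\<forall>i. marginal W i = P $ i"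
    have "cmin C = (\<Sum>J\<in>UNIV. cmin C * W J)"
      using sumV_1[OF assms(1) W(2)] by (simp add: sum_distrib_left[symmetric])
    also have "\<dots> \<le> (\<Sum>J\<in>UNIV. C J * W J)"
      by (intro sum_mono mult_right_mono) (use W cmin_le in auto)
    finally show "cmin C \<le> (\<Sum>J\<in>UNIV. C J * W J)" .
  qed
qed

lemma primal_ne:
  fixes P :: "real^'n::finite^'d::finite"
  assumes "\<forall>i. prob_vec (P$i)"
  shows "{(\<Sum>J\<in>UNIV. C J * V J) | V. (\<forall>J. 0 \<le> V J) \<and> (\<forall>i. marginal V i = P$i)} \<noteq> {}"
proof -
  have nn: "0 \<le> P$k$j" for k j using assms by (simp add: prob_vec_def)
  have "\<forall>J. 0 \<le> (\<Prod>k\<in>UNIV. P$k$(J k))"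
    using nn by (simp add: prod_nonneg)
  moreover have "\<forall>i. marginal (\<lambda>J. \<Prod>k\<in>UNIV. P$k$(J k)) i = P$i"
    using prod_feasible[OF assms] by blast
  ultimately have "\<exists>V. (\<forall>J. 0 \<le> V J) \<and> (\<forall>i. marginal V i = P$i)"
    by (intro exI[of _ "\<lambda>J. \<Prod>k\<in>UNIV. P$k$(J k)"]) simp
  then show ?thesis by simp
qed

lemma obj_le_cost:
  fixes P :: "real^'n::finite^'d::finite"
  assumes "\<forall>J. 0 \<le> Cx C y J" "\<forall>J. 0 \<le> V J" "\<forall>i. marginal V i = P$i"
  shows "objective P y \<le> (\<Sum>J\<in>UNIV. C J * V J)"
proof -
  have "objective P y = inner (\<Sum>J\<in>UNIV. V J *\<^sub>R AJ J) y"
    using assms(3) by (simp add: objective_inner marg_eq_iff)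
  also have "\<dots> = (\<Sum>J\<in>UNIV. V J * inner y (AJ J))"
    by (simp add: inner_sum_left inner_commute[of "AJ _" y])
  also have "\<dots> \<le> (\<Sum>J\<in>UNIV. C J * V J)"
  proof (rule sum_mono)
    fix J
    have "inner y (AJ J) \<le> C J" using assms(1) by (simp add: Cx_AJ)
    then show "V J * inner y (AJ J) \<le> C J * V J"
      using assms(2) mult_left_mono[of "inner y (AJ J)" "C J" "V J"] by (simp add: mult.commute)
  qed
  finally show ?thesis .
qed

lemma weak_dual:
  fixes P :: "real^'n::finite^'d::finite"
  assumes "\<forall>i. prob_vec (P$i)" "\<forall>J. 0 \<le> Cx C y J"
  shows "objective P y \<le> tau C P"
  unfolding tau_def
  by (rule cInf_greatest[OF primal_ne[OF assms(1)]]) (use obj_le_cost[OF assms(2)] in blast)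

lemma strong_dual:
  fixes P :: "real^'n::finite^'d::finite"
  assumes prob: "\<forall>i. prob_vec (P$i)"
  shows "\<exists>y. (\<forall>J. 0 \<le> Cx C y J) \<and> tau C P \<le> objective P y"
proof -
  define T where "T = tau C P"
  define gen :: "('d \<Rightarrow> 'n) option \<Rightarrow> (real^'n^'d) \<times> real" where
    "gen k = (case k of None \<Rightarrow> (-P, -T) | Some J \<Rightarrow> (AJ J, C J))" for k
  have noK: "\<not> (\<exists>l. (\<forall>k. 0 \<le> l k) \<and> (0, -1) = (\<Sum>k\<in>UNIV. l k *\<^sub>R gen k))"
  proof
    assume "\<exists>l. (\<forall>k. 0 \<le> l k) \<and> (0, -1) = (\<Sum>k\<in>UNIV. l k *\<^sub>R gen k)"
    then obtain l where l0: "\<forall>k. 0 \<le> l k" and lz: "(0, -1) = (\<Sum>k\<in>UNIV. l k *\<^sub>R gen k)" by blast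
    define V where "V J = l (Some J)" for J
    define m where "m = l None"
    have eq: "(0::real^'n^'d, -1::real) = (- (m *\<^sub>R P) + (\<Sum>J\<in>UNIV. V J *\<^sub>R AJ J),
                   - (m * T) + (\<Sum>J\<in>UNIV. V J * C J))"
      using lz by (simp add: sum_UNIV_option gen_def V_def m_def fst_sum snd_sum prod_eq_iff)
    then have e1: "(\<Sum>J\<in>UNIV. V J *\<^sub>R AJ J) = m *\<^sub>R P" and e2: "(\<Sum>J\<in>UNIV. V J * C J) = m * T - 1"
      by (auto simp: algebra_simps)
    have V0: "\<forall>J. 0 \<le> V J" "0 \<le> m" using l0 by (auto simp: V_def m_def)
    show False
    proof (cases "m = 0")
      case True
      obtain i :: 'd where True by auto
      have "marginal V i = 0" using e1 True by (simp add: marg_sum vec_eq_iff)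
      then have "(\<Sum>J\<in>UNIV. V J) = 0" by (simp add: sumV_marg[of V i])
      then have "\<forall>J\<in>UNIV. V J = 0" using V0 by (subst sum_nonneg_eq_0_iff[symmetric]) auto
      then show False using e2 True by simp
    next
      case False
      then have mpos: "0 < m" using V0 by simp
      define W where "W J = V J / m" for J
      have W0: "\<forall>J. 0 \<le> W J" using V0 mpos by (simp add: W_def)
      have "(\<Sum>J\<in>UNIV. W J *\<^sub>R AJ J) = (1/m) *\<^sub>R (\<Sum>J\<in>UNIV. V J *\<^sub>R AJ J)"
        by (simp add: W_def scaleR_sum_right divide_inverse mult.commute)
      also have "\<dots> = P" using e1 mpos by simp
      finally have "\<forall>i. marginal W i = P$i" by (simp add: marg_eq_iff)
      from tau_lower[OF prob W0 this, of C]
      have "T \<le> (\<Sum>J\<in>UNIV. C J * W J)" by (simp add: T_def)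
      also have "\<dots> = (\<Sum>J\<in>UNIV. V J * C J) / m"
        by (simp add: W_def sum_divide_distrib mult.commute)
      also have "\<dots> = T - 1/m" using e2 mpos by (simp add: field_simps)
      finally show False using mpos by simp
    qed
  qed
  from farkas_gen[OF noK] obtain a where a: "inner a (0, -1) < 0" "\<forall>k. 0 \<le> inner a (gen k)" by blast
  obtain w \<gamma> where aw: "a = (w, \<gamma>)" by (cases a)
  have g0: "0 < \<gamma>" using a(1) by (simp add: aw)
  have hJ: "0 \<le> inner w (AJ J) + \<gamma> * C J" for J
    using a(2)[rule_format, of "Some J"] by (simp add: aw gen_def)
  have hN: "0 \<le> - inner w P - \<gamma> * T"
    using a(2)[rule_format, of None] by (simp add: aw gen_def)
  define y where "y = (- 1/\<gamma>) *\<^sub>R w"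
  have "\<forall>J. 0 \<le> Cx C y J"
  proof
    fix J
    have "inner y (AJ J) = - inner w (AJ J) / \<gamma>" by (simp add: y_def)
    also have "\<dots> \<le> C J"
    proof -
      have "- inner w (AJ J) \<le> C J * \<gamma>" using hJ[of J] by (simp add: mult.commute)
      then have "- inner w (AJ J) / \<gamma> \<le> C J" by (metis pos_divide_le_eq[OF g0])
      then show ?thesis by simp
    qed
    finally show "0 \<le> Cx C y J" by (simp add: Cx_AJ)
  qed
  moreover have "T \<le> objective P y"
  proof -
    have "objective P y = - inner P w / \<gamma>" by (simp add: objective_inner y_def)
    moreover have "T \<le> - inner P w / \<gamma>"
    proof -
      have "T * \<gamma> \<le> - inner P w" using hN by (simp add: inner_commute mult.commute)
      then show ?thesis by (metis pos_le_divide_eq[OF g0])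
    qed
    ultimately show ?thesis by simp
  qed
  ultimately show ?thesis by (auto simp: T_def)
qed

lemma part_a:
  fixes P :: "real^'n::finite^'d::finite"
  assumes "\<forall>i. prob_vec (P$i)"
  shows "cmin C \<le> tau C P"
  unfolding tau_def
proof (rule cInf_greatest[OF primal_ne[OF assms]], clarify)
  fix W :: "('d \<Rightarrow> 'n) \<Rightarrow> real" assume W: "\<forall>J. 0 \<le> W J" "\<forall>i. marginal W i = P $ i"
  have "cmin C = (\<Sum>J\<in>UNIV. cmin C * W J)"
    using sumV_1[OF assms W(2)] by (simp add: sum_distrib_left[symmetric])
  also have "\<dots> \<le> (\<Sum>J\<in>UNIV. C J * W J)"
    by (intro sum_mono mult_right_mono) (use W cmin_le in auto)
  finally show "cmin C \<le> (\<Sum>J\<in>UNIV. C J * W J)" .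
qed

lemma SUP_eqI':
  fixes f :: "'a \<Rightarrow> real"
  assumes "S \<noteq> {}" "\<And>y. y \<in> S \<Longrightarrow> f y \<le> T" "\<And>e. 0 < e \<Longrightarrow> \<exists>y\<in>S. T - e < f y"
  shows "(SUP y\<in>S. f y) = T"
proof (rule antisym)
  show "(SUP y\<in>S. f y) \<le> T" using assms(1,2) by (intro cSUP_least) auto
  show "T \<le> (SUP y\<in>S. f y)"
  proof (rule ccontr)
    assume "\<not> T \<le> (SUP y\<in>S. f y)"
    then have "0 < T - (SUP y\<in>S. f y)" by simp
    from assms(3)[OF this] obtain y where y: "y \<in> S" "(SUP y\<in>S. f y) < f y" by auto
    have "bdd_above (f ` S)" using assms(2) by (intro bdd_aboveI[of _ T]) auto
    then have "f y \<le> (SUP y\<in>S. f y)" using y(1) by (intro cSUP_upper)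
    with y(2) show False by simp
  qed
qed

definition shiftv :: "real^'n::finite^'d::finite \<Rightarrow> ('d \<Rightarrow> real) \<Rightarrow> real \<Rightarrow> real^'n^'d" where
  "shiftv y s e = (\<chi> i j. y$i$j + s i - e)"

lemma Cx_shiftv: "Cx C (shiftv y s e) J = Cx C y J - (\<Sum>i\<in>UNIV. s i) + real CARD('d) * e"
  for y :: "real^'n::finite^'d::finite"
  by (simp add: Cx_def shiftv_def sum.distrib sum_subtractf algebra_simps)

lemma obj_shiftv:
  fixes P :: "real^'n::finite^'d::finite"
  assumes "\<forall>i. prob_vec (P$i)"
  shows "objective P (shiftv y s e) = objective P y + (\<Sum>i\<in>UNIV. s i) - real CARD('d) * e"
proof -
  have "objective P (shiftv y s e) = (\<Sum>i\<in>UNIV. \<Sum>j\<in>UNIV. P$i$j * y$i$j + P$i$j * (s i - e))"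
    by (simp add: objective_def shiftv_def inner_vec_def algebra_simps)
  also have "\<dots> = (\<Sum>i\<in>UNIV. (\<Sum>j\<in>UNIV. P$i$j * y$i$j) + (s i - e) * (\<Sum>j\<in>UNIV. P$i$j))"
    by (simp add: sum.distrib sum_distrib_left mult.commute)
  also have "\<dots> = (\<Sum>i\<in>UNIV. (\<Sum>j\<in>UNIV. P$i$j * y$i$j) + (s i - e))"
    using assms by (simp add: prob_vec_def)
  also have "\<dots> = objective P y + (\<Sum>i\<in>UNIV. s i) - real CARD('d) * e"
    by (simp add: objective_def inner_vec_def sum.distrib sum_subtractf)
  finally show ?thesis .
qed

lemma rowsum_shiftv: "rowsum (shiftv y s e) i = rowsum y i + real CARD('n) * (s i - e)"
  for y :: "real^'n::finite^'d::finite"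
proof -
  have "rowsum (shiftv y s e) i = (\<Sum>j\<in>UNIV. y$i$j + (s i - e))"
    by (simp add: rowsum_def shiftv_def algebra_simps)
  also have "\<dots> = rowsum y i + real CARD('n) * (s i - e)"
    by (simp add: sum.distrib rowsum_def)
  finally show ?thesis .
qed

lemma part_b:
  fixes P :: "real^'n::finite^'d::finite"
  assumes prob: "\<forall>i. prob_vec (P$i)"
  shows "((\<exists>y. (\<forall>J. 0 \<le> Cx C y J) \<and> objective P y = tau C P)
          \<and> (\<forall>y. (\<forall>J. 0 \<le> Cx C y J) \<longrightarrow> objective P y \<le> tau C P))
       \<and> tau C P = (SUP y\<in>Dhat C. objective P y)
       \<and> tau C P = (SUP y\<in>Dom C. objective P y)"
proof -
  obtain y where y: "\<forall>J. 0 \<le> Cx C y J" "tau C P \<le> objective P y"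
    using strong_dual[OF prob] by blast
  have yeq: "objective P y = tau C P" using y weak_dual[OF prob y(1)] by simp
  define Rb where "Rb = (\<Sum>i\<in>UNIV. rowsum y i) / real CARD('d)"
  define s where "s i = (Rb - rowsum y i) / real CARD('n)" for i
  have s0: "(\<Sum>i\<in>UNIV. s i) = 0"
    by (simp add: s_def Rb_def sum_divide_distrib[symmetric] sum_subtractf)
  have inDom: "shiftv y s e \<in> Dom C" if "0 < e" for e
  proof -
    have "\<forall>J. 0 < Cx C (shiftv y s e) J"
      using y(1) that by (simp add: Cx_shiftv s0 add_nonneg_pos)
    moreover have "rowsum (shiftv y s e) i = Rb - real CARD('n) * e" for i
    proof -
      have n0: "real CARD('n) \<noteq> 0" by simp
      have "real CARD('n) * s i = Rb - rowsum y i" using n0 by (simp add: s_def)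
      then show ?thesis by (simp add: rowsum_shiftv right_diff_distrib)
    qed
    ultimately show ?thesis by (simp add: Dom_def Dhat_def)
  qed
  have objs: "objective P (shiftv y s e) = tau C P - real CARD('d) * e" for e
    by (simp add: obj_shiftv[OF prob] s0 yeq)
  have DomDhat: "Dom C \<subseteq> Dhat C" by (auto simp: Dom_def)
  have le: "objective P z \<le> tau C P" if "z \<in> Dhat C" for z
    using that weak_dual[OF prob, of C z] by (auto simp: Dhat_def less_imp_le)
  have approx: "\<exists>z\<in>Dom C. tau C P - e < objective P z" if "0 < e" for e
  proof -
    define e' where "e' = e / (2 * real CARD('d))"
    have "0 < e'" using that by (simp add: e'_def)
    moreover have "tau C P - e < objective P (shiftv y s e')"
      using that by (simp add: objs e'_def)
    ultimately show ?thesis using inDom by blast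
  qed
  have "tau C P = (SUP y\<in>Dhat C. objective P y)"
  proof (rule SUP_eqI'[symmetric])
    show "Dhat C \<noteq> {}" using inDom[of 1] DomDhat by auto
    show "objective P z \<le> tau C P" if "z \<in> Dhat C" for z using le that .
    show "\<exists>y\<in>Dhat C. tau C P - e < objective P y" if "0 < e" for e
      using approx[OF that] DomDhat by blast
  qed
  moreover have "tau C P = (SUP y\<in>Dom C. objective P y)"
    by (rule SUP_eqI'[symmetric]) (use inDom[of 1] DomDhat le approx in auto)
  ultimately show ?thesis using y(1) yeq weak_dual[OF prob] by blast
qed

lemma x0_nth: "x0 C $ i $ j = (cmin C - 1) / real CARD('d)"
  for C :: "('d::finite \<Rightarrow> 'n::finite) \<Rightarrow> real"
  by (simp add: x0_def Let_def)

lemma Cx_x0: "Cx C (x0 C) J = C J - cmin C + 1"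
  for C :: "('d::finite \<Rightarrow> 'n::finite) \<Rightarrow> real"
  by (simp add: Cx_def x0_nth)

lemma part_d: "x0 C \<in> Dom C"
  for C :: "('d::finite \<Rightarrow> 'n::finite) \<Rightarrow> real"
proof -
  have "\<forall>J. 0 < Cx C (x0 C) J" using cmin_le[of C] by (simp add: Cx_x0 add.commute add_pos_nonneg)
  moreover have "\<forall>i i'. rowsum (x0 C) i = rowsum (x0 C) i'" by (simp add: rowsum_def x0_nth)
  ultimately show ?thesis by (simp add: Dom_def Dhat_def)
qed

lemma prod_ge_pow2:
  fixes f :: "'a \<Rightarrow> real"
  assumes "finite I" "\<forall>i\<in>I. 2 \<le> f i"
  shows "2 ^ card I \<le> prod f I"
proof -
  have "(\<Prod>i\<in>I. (2::real)) \<le> prod f I" using assms by (intro prod_mono) auto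
  then show ?thesis by simp
qed

lemma sum_le_prod2:
  fixes f :: "'a \<Rightarrow> real"
  assumes "finite I" "I \<noteq> {}" "\<forall>i\<in>I. 2 \<le> f i"
  shows "sum f I \<le> prod f I"
  using assms
proof (induction I rule: finite_ne_induct)
  case (singleton x) then show ?case by simp
next
  case (insert x F)
  have fx: "2 \<le> f x" using insert by auto
  have pF: "2 \<le> prod f F"
  proof -
    have "2 ^ card F \<le> prod f F" using insert by (intro prod_ge_pow2) auto
    moreover have "(2::real) \<le> 2 ^ card F"
    proof -
      have "1 \<le> card F" using insert card_gt_0_iff[of F] by simp
      from power_increasing[OF this, of "2::real"] show ?thesis by simp
    qed
    ultimately show ?thesis by simp
  qed
  have ih: "sum f F \<le> prod f F" using insert by auto
  have "sum f (insert x F) = f x + sum f F" using insert by simp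
  also have "\<dots> \<le> f x + prod f F" using ih by simp
  also have "\<dots> \<le> f x * prod f F"
  proof -
    have "0 \<le> (f x - 1) * (prod f F - 1) - 1"
    proof -
      have "1 \<le> (f x - 1) * (prod f F - 1)" using fx pF mult_mono[of 1 "f x - 1" 1 "prod f F - 1"]
        by simp
      then show ?thesis by simp
    qed
    then show ?thesis by (simp add: algebra_simps)
  qed
  also have "\<dots> = prod f (insert x F)" using insert by simp
  finally show ?case .
qed

lemma key_ineq:
  fixes u :: "'a \<Rightarrow> real"
  assumes "finite I" "2 \<le> card I" "\<forall>i\<in>I. 2 \<le> u i"
  shows "(1 + 2 * sum u I)^2 / real (card I) + (\<Sum>i\<in>I. (u i)^2) < 4 * (prod u I)^2"
proof -
  have ne: "I \<noteq> {}" using assms(2) by auto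
  define Q where "Q = prod u I"
  have Q4: "4 \<le> Q"
  proof -
    have "2 ^ card I \<le> Q" unfolding Q_def using assms by (intro prod_ge_pow2) auto
    moreover have "(4::real) \<le> 2 ^ card I"
      using power_increasing[OF assms(2), of "2::real"] by simp
    ultimately show ?thesis by simp
  qed
  have S: "sum u I \<le> Q" unfolding Q_def by (rule sum_le_prod2) (use assms ne in auto)
  have S0: "0 \<le> sum u I" using assms by (intro sum_nonneg) auto
  have S2: "(\<Sum>i\<in>I. (u i)^2) \<le> Q^2"
  proof -
    have "(\<Sum>i\<in>I. (u i)^2) \<le> (\<Prod>i\<in>I. (u i)^2)"
    proof (rule sum_le_prod2)
      show "\<forall>i\<in>I. 2 \<le> (u i)^2"
      proof
        fix i assume "i \<in> I"
        then have "2 \<le> u i" using assms by auto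
        then have "2^2 \<le> (u i)^2" by (intro power_mono) auto
        then show "2 \<le> (u i)^2" by simp
      qed
    qed (use assms ne in auto)
    also have "\<dots> = Q^2" by (simp add: Q_def prod_power_distrib)
    finally show ?thesis .
  qed
  have "(1 + 2 * sum u I)^2 \<le> (1 + 2 * Q)^2"
    using S S0 by (intro power_mono) auto
  then have "(1 + 2 * sum u I)^2 / real (card I) \<le> (1 + 2 * Q)^2 / 2"
    using assms(2) by (intro frac_le) auto
  moreover have "(1 + 2 * Q)^2 / 2 + Q^2 < 4 * Q^2"
  proof -
    have "2 * Q^2 - 4 * Q - 1 > 0"
    proof -
      have "2 * Q^2 - 4*Q - 1 = 2 * Q * (Q - 2) - 1" by (simp add: power2_eq_square algebra_simps)
      moreover have "2 * Q * (Q - 2) \<ge> 16" using Q4 mult_mono[of 8 "2*Q" 2 "Q - 2"] by simp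
      ultimately show ?thesis by simp
    qed
    then show ?thesis by (simp add: power2_eq_square algebra_simps)
  qed
  ultimately show ?thesis using S2 unfolding Q_def by linarith
qed

lemma norm2_vec: "(norm (v::real^'n::finite))^2 = (\<Sum>j\<in>UNIV. (v$j)^2)"
  unfolding power2_norm_eq_inner by (simp add: inner_vec_def power2_eq_square)

lemma cmax_facts:
  fixes C :: "('d::finite \<Rightarrow> 'n::finite) \<Rightarrow> real"
  assumes "C \<noteq> (\<lambda>_. 0)"
  shows "\<bar>C J\<bar> \<le> cmax C" "0 < cmax C" "- cmax C \<le> cmin C" "cmin C \<le> cmax C"
proof -
  show abs: "\<bar>C J\<bar> \<le> cmax C" for J unfolding cmax_def by (rule Max_ge) auto
  obtain J where "C J \<noteq> 0" using assms by auto
  then show "0 < cmax C" using abs[of J] by simp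
  have "cmin C \<in> range C" unfolding cmin_def by (rule Min_in) auto
  then obtain J0 where "cmin C = C J0" by auto
  then show "- cmax C \<le> cmin C" "cmin C \<le> cmax C" using abs[of J0] by auto
qed

lemma bound_c:
  fixes C :: "('d::finite \<Rightarrow> 'n::finite) \<Rightarrow> real" and P x :: "real^'n^'d"
  assumes n2: "CARD('n) \<ge> 2" and d2: "CARD('d) \<ge> 2" and C0: "C \<noteq> (\<lambda>_. 0)"
    and prob: "\<forall>i. prob_vec (P$i)" and Ppos: "\<forall>i j. 0 < P$i$j"
    and feas: "\<forall>J. 0 \<le> Cx C x J" and objge: "objective P x \<ge> cmin C"
    and rows: "\<forall>i i'. rowsum x i = rowsum x i'"
  shows "(\<Sum>i\<in>UNIV. (norm (x$i))^2) < 4 * (cmax C)^2 * real CARD('n) / (pmin P)^2"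
proof -
  define c where "c = cmax C"
  note cf = cmax_facts[OF C0, folded c_def]
  define nn where "nn = real CARD('n)"
  define dd where "dd = real CARD('d)"
  have nn2: "2 \<le> nn" using n2 by (simp add: nn_def)
  have dd2: "2 \<le> dd" using d2 by (simp add: dd_def)
  define m where "m i = Min (range (\<lambda>j. P$i$j))" for i
  have m_le: "m i \<le> P$i$j" for i j unfolding m_def by (rule Min_le) auto
  have m_pos: "0 < m i" for i
  proof -
    have "m i \<in> range (\<lambda>j. P$i$j)" unfolding m_def by (rule Min_in) auto
    then show ?thesis using Ppos by auto
  qed
  have Psum: "(\<Sum>j\<in>UNIV. P$i$j) = 1" for i using prob by (simp add: prob_vec_def)
  have m_n: "nn * m i \<le> 1" for i
  proof -
    have "(\<Sum>j\<in>(UNIV::'n set). m i) \<le> (\<Sum>j\<in>UNIV. P$i$j)" by (rule sum_mono) (simp add: m_le)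
    then show ?thesis by (simp add: Psum nn_def)
  qed
  define u where "u i = 1 / m i" for i
  have u2: "2 \<le> u i" for i
  proof -
    have "nn \<le> 1 / m i" using m_n[of i] m_pos[of i] by (simp add: pos_le_divide_eq)
    then show ?thesis using nn2 by (simp add: u_def)
  qed
  have pmin_eq: "pmin P = (\<Prod>i\<in>UNIV. m i)" by (simp add: pmin_def m_def)
  have prod_u: "(\<Prod>i\<in>UNIV. u i) = 1 / pmin P"
    by (simp add: pmin_eq u_def prod_dividef)
  define M where "M i = Max (range (\<lambda>j. x$i$j))" for i
  have x_le_M: "x$i$j \<le> M i" for i j unfolding M_def by (rule Max_ge) auto
  have M_in: "\<exists>j. x$i$j = M i" for i
  proof -
    have "M i \<in> range (\<lambda>j. x$i$j)" unfolding M_def by (rule Max_in) auto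
    then show ?thesis by auto
  qed
  define Js where "Js i = (SOME j. x$i$j = M i)" for i
  have Js: "x$i$(Js i) = M i" for i unfolding Js_def by (rule someI_ex[OF M_in])
  have sumM_le: "(\<Sum>i\<in>UNIV. M i) \<le> c"
  proof -
    have "0 \<le> Cx C x Js" using feas by auto
    then have "(\<Sum>i\<in>UNIV. M i) \<le> C Js" by (simp add: Cx_def Js)
    also have "\<dots> \<le> c" using cf(1)[of Js] by simp
    finally show ?thesis .
  qed
  define px where "px i = (\<Sum>j\<in>UNIV. P$i$j * x$i$j)" for i
  have obj_px: "objective P x = (\<Sum>i\<in>UNIV. px i)"
    by (simp add: objective_def inner_vec_def px_def)
  have gap: "M i - px i = (\<Sum>j\<in>UNIV. P$i$j * (M i - x$i$j))" for i
  proof -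
    have "(\<Sum>j\<in>UNIV. P$i$j * (M i - x$i$j)) = M i * (\<Sum>j\<in>UNIV. P$i$j) - px i"
      by (simp add: px_def right_diff_distrib sum_subtractf sum_distrib_left mult.commute)
    then show ?thesis by (simp add: Psum)
  qed
  have gap_nonneg: "0 \<le> M i - px i" for i
    unfolding gap using Ppos x_le_M by (intro sum_nonneg mult_nonneg_nonneg) (auto simp: less_imp_le)
  have single: "P$i$j * (M i - x$i$j) \<le> M i - px i" for i j
    unfolding gap using Ppos x_le_M
    by (intro member_le_sum[where f="\<lambda>j. P$i$j * (M i - x$i$j)"]) (auto simp: less_imp_le)
  have gapsum: "(\<Sum>i\<in>UNIV. M i - px i) \<le> 2 * c"
  proof -
    have "(\<Sum>i\<in>UNIV. M i - px i) = (\<Sum>i\<in>UNIV. M i) - objective P x"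
      by (simp add: obj_px sum_subtractf)
    then show ?thesis using sumM_le objge cf(3) by simp
  qed
  have gap_le: "M i - px i \<le> 2 * c" for i
  proof -
    have "M i - px i \<le> (\<Sum>i\<in>UNIV. M i - px i)"
      by (rule member_le_sum[where f="\<lambda>i. M i - px i"]) (use gap_nonneg in auto)
    then show ?thesis using gapsum by simp
  qed
  define s where "s i = 2 * c * u i" for i
  have x_ge: "M i - s i \<le> x$i$j" for i j
  proof -
    have "m i * (M i - x$i$j) \<le> P$i$j * (M i - x$i$j)"
      using m_le x_le_M by (intro mult_right_mono) auto
    also have "\<dots> \<le> 2 * c" using single gap_le order_trans by blast
    finally have "M i - x$i$j \<le> 2 * c / m i" using m_pos[of i] by (simp add: pos_le_divide_eq mult.commute)
    then show ?thesis by (simp add: s_def u_def)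
  qed
  obtain i0 :: 'd where True by auto
  define R where "R = rowsum x i0"
  have rowR: "(\<Sum>j\<in>UNIV. x$i$j) = R" for i using rows by (simp add: R_def rowsum_def)
  define \<rho> where "\<rho> = R / nn"
  have nnpos: "0 < nn" using nn2 by simp
  have rho_le_M: "\<rho> \<le> M i" for i
  proof -
    have "R \<le> (\<Sum>j\<in>(UNIV::'n set). M i)" unfolding rowR[of i, symmetric] by (intro sum_mono x_le_M)
    then show ?thesis using nnpos by (simp add: \<rho>_def nn_def pos_divide_le_eq mult.commute)
  qed
  have M_le_rho: "M i - s i \<le> \<rho>" for i
  proof -
    have "(\<Sum>j\<in>(UNIV::'n set). M i - s i) \<le> R" unfolding rowR[of i, symmetric] by (intro sum_mono x_ge)
    then show ?thesis using nnpos by (simp add: \<rho>_def nn_def pos_le_divide_eq mult.commute)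
  qed
  have rho_up: "dd * \<rho> \<le> c"
  proof -
    have "(\<Sum>i\<in>(UNIV::'d set). \<rho>) \<le> (\<Sum>i\<in>UNIV. M i)" by (intro sum_mono rho_le_M)
    then show ?thesis using sumM_le by (simp add: dd_def)
  qed
  have rho_low: "- c - (\<Sum>i\<in>UNIV. s i) \<le> dd * \<rho>"
  proof -
    have "objective P x \<le> (\<Sum>i\<in>UNIV. M i)"
      unfolding obj_px using gap_nonneg by (intro sum_mono) (simp add: algebra_simps)
    moreover have "(\<Sum>i\<in>UNIV. M i) \<le> (\<Sum>i\<in>UNIV. \<rho> + s i)"
      using M_le_rho by (intro sum_mono) (simp add: algebra_simps)
    moreover have "(\<Sum>i\<in>UNIV. \<rho> + s i) = dd * \<rho> + (\<Sum>i\<in>UNIV. s i)"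
      by (simp add: sum.distrib dd_def)
    ultimately show ?thesis using objge cf(3) by linarith
  qed
  have s_nonneg: "0 \<le> s i" for i using cf(2) u2[of i] by (simp add: s_def)
  have Ss: "0 \<le> (\<Sum>i\<in>UNIV. s i)" using s_nonneg by (simp add: sum_nonneg)
  have rho2: "dd * \<rho>^2 \<le> (c + (\<Sum>i\<in>UNIV. s i))^2 / dd"
  proof -
    have "\<bar>dd * \<rho>\<bar> \<le> c + (\<Sum>i\<in>UNIV. s i)" using rho_up rho_low Ss cf(2) by linarith
    then have "(dd * \<rho>)^2 \<le> (c + (\<Sum>i\<in>UNIV. s i))^2"
      by (metis abs_ge_zero power2_abs power_mono)
    then have "dd * (dd * \<rho>^2) \<le> (c + (\<Sum>i\<in>UNIV. s i))^2" by (simp add: power2_eq_square mult.assoc mult.left_commute)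
    then show ?thesis using dd2 by (simp add: pos_le_divide_eq mult.commute)
  qed
  have row_bound: "(\<Sum>j\<in>UNIV. (x$i$j)^2) \<le> nn * \<rho>^2 + nn * (s i)^2 / 4" for i
  proof -
    define z where "z j = x$i$j - \<rho>" for j
    define a where "a = M i - s i - \<rho>"
    have za: "a \<le> z j" "z j \<le> a + s i" for j using x_ge[of i j] x_le_M[of i j] by (auto simp: z_def a_def)
    have zsum: "(\<Sum>j\<in>UNIV. z j) = 0"
      using nnpos by (simp add: z_def sum_subtractf rowR \<rho>_def nn_def)
    have "(\<Sum>j\<in>UNIV. (x$i$j)^2) = (\<Sum>j\<in>UNIV. \<rho>^2 + 2 * \<rho> * z j + (z j)^2)"
      by (intro sum.cong) (auto simp: z_def power2_eq_square algebra_simps)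
    also have "\<dots> = nn * \<rho>^2 + 2 * \<rho> * (\<Sum>j\<in>UNIV. z j) + (\<Sum>j\<in>UNIV. (z j)^2)"
      by (simp add: sum.distrib sum_distrib_left nn_def)
    also have "\<dots> = nn * \<rho>^2 + (\<Sum>j\<in>UNIV. (z j)^2)" using zsum by simp
    finally have e1: "(\<Sum>j\<in>UNIV. (x$i$j)^2) = nn * \<rho>^2 + (\<Sum>j\<in>UNIV. (z j)^2)" .
    have "0 \<le> (\<Sum>j\<in>UNIV. (z j - a) * (a + s i - z j))"
      using za by (intro sum_nonneg mult_nonneg_nonneg) auto
    also have "(\<Sum>j\<in>UNIV. (z j - a) * (a + s i - z j))
        = (2 * a + s i) * (\<Sum>j\<in>UNIV. z j) - (\<Sum>j\<in>UNIV. (z j)^2) - nn * (a * (a + s i))"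
    proof -
      have "(\<Sum>j\<in>UNIV. (z j - a) * (a + s i - z j)) = (\<Sum>j\<in>UNIV. (2 * a + s i) * z j - (z j)^2 - a * (a + s i))"
        by (intro sum.cong) (auto simp: power2_eq_square algebra_simps)
      also have "\<dots> = (2 * a + s i) * (\<Sum>j\<in>UNIV. z j) - (\<Sum>j\<in>UNIV. (z j)^2) - nn * (a * (a + s i))"
        by (simp add: sum_subtractf sum_distrib_left nn_def)
      finally show ?thesis .
    qed
    finally have "(\<Sum>j\<in>UNIV. (z j)^2) \<le> - nn * (a * (a + s i))" using zsum by simp
    also have "\<dots> \<le> nn * (s i)^2 / 4"
    proof -
      have "- (a * (a + s i)) \<le> (s i)^2 / 4"
        using zero_le_power2[of "a + s i / 2"] by (simp add: power2_eq_square algebra_simps)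
      then show ?thesis using nnpos mult_left_mono[of "- (a * (a + s i))" "(s i)^2/4" nn] by simp
    qed
    finally show ?thesis using e1 by simp
  qed
  have norm_eq: "(\<Sum>i\<in>UNIV. (norm (x$i))^2) = (\<Sum>i\<in>UNIV. \<Sum>j\<in>UNIV. (x$i$j)^2)"
    by (simp add: norm2_vec)
  have "(\<Sum>i\<in>UNIV. \<Sum>j\<in>UNIV. (x$i$j)^2) \<le> (\<Sum>i\<in>UNIV. nn * \<rho>^2 + nn * (s i)^2 / 4)"
    by (intro sum_mono row_bound)
  also have "\<dots> = nn * (dd * \<rho>^2) + nn * (\<Sum>i\<in>UNIV. (s i)^2) / 4"
    by (simp add: sum.distrib sum_distrib_left sum_divide_distrib dd_def algebra_simps)
  also have "\<dots> \<le> nn * ((c + (\<Sum>i\<in>UNIV. s i))^2 / dd) + nn * (\<Sum>i\<in>UNIV. (s i)^2) / 4"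
    using mult_left_mono[OF rho2 less_imp_le[OF nnpos]] by linarith
  also have "\<dots> = nn * c^2 * ((1 + 2 * (\<Sum>i\<in>UNIV. u i))^2 / dd + (\<Sum>i\<in>UNIV. (u i)^2))"
  proof -
    have h1: "(\<Sum>i\<in>UNIV. s i) = 2 * c * (\<Sum>i\<in>UNIV. u i)" by (simp add: s_def sum_distrib_left)
    have h2: "(\<Sum>i\<in>UNIV. (s i)^2) = 4 * c^2 * (\<Sum>i\<in>UNIV. (u i)^2)"
      by (simp add: s_def sum_distrib_left power_mult_distrib)
    have dd0: "dd \<noteq> 0" using dd2 by simp
    show ?thesis unfolding h1 h2
      by (simp add: field_simps dd0 power2_eq_square)
  qed
  also have "\<dots> < nn * c^2 * (4 * (\<Prod>i\<in>UNIV. u i)^2)"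
  proof -
    have A: "(1 + 2 * (\<Sum>i\<in>UNIV. u i))^2 / dd + (\<Sum>i\<in>UNIV. (u i)^2) < 4 * (\<Prod>i\<in>UNIV. u i)^2"
      using key_ineq[of "UNIV::'d set" u] d2 u2 by (simp add: dd_def)
    have B: "0 < nn * c^2" using nnpos cf(2) by simp
    show ?thesis using mult_strict_left_mono[OF A B] .
  qed
  also have "\<dots> = 4 * c^2 * nn / (pmin P)^2"
    by (simp add: prod_u power_divide)
  finally show ?thesis using norm_eq by (simp add: c_def nn_def)
qed

lemma pmin_facts:
  fixes P :: "real^'n::finite^'d::finite"
  assumes n2: "CARD('n) \<ge> 2" and d2: "CARD('d) \<ge> 2"
    and prob: "\<forall>i. prob_vec (P$i)" and Ppos: "\<forall>i j. 0 < P$i$j"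
  shows "0 < pmin P" "pmin P \<le> 1/4"
proof -
  define m where "m i = Min (range (\<lambda>j. P$i$j))" for i
  have m_le: "m i \<le> P$i$j" for i j unfolding m_def by (rule Min_le) auto
  have m_pos: "0 < m i" for i
  proof -
    have "m i \<in> range (\<lambda>j. P$i$j)" unfolding m_def by (rule Min_in) auto
    then show ?thesis using Ppos by auto
  qed
  have m_half: "m i \<le> 1/2" for i
  proof -
    have "(\<Sum>j\<in>(UNIV::'n set). m i) \<le> (\<Sum>j\<in>UNIV. P$i$j)" by (rule sum_mono) (simp add: m_le)
    then have "real CARD('n) * m i \<le> 1" using prob by (simp add: prob_vec_def)
    moreover have "2 * m i \<le> real CARD('n) * m i" using n2 m_pos[of i]
      by (intro mult_right_mono) auto
    ultimately show ?thesis by simp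
  qed
  have pm: "pmin P = (\<Prod>i\<in>UNIV. m i)" by (simp add: pmin_def m_def)
  show "0 < pmin P" unfolding pm using m_pos by (simp add: prod_pos)
  have "(\<Prod>i\<in>UNIV. m i) \<le> (\<Prod>i\<in>(UNIV::'d set). 1/2)"
    using m_pos m_half by (intro prod_mono) (auto simp: less_imp_le)
  also have "\<dots> = (1/2) ^ CARD('d)" by simp
  also have "\<dots> \<le> (1/2)^2" using d2 by (intro power_decreasing) auto
  finally show "pmin P \<le> 1/4" unfolding pm by (simp add: power2_eq_square)
qed

lemma part_c:
  fixes C :: "('d::finite \<Rightarrow> 'n::finite) \<Rightarrow> real" and P x :: "real^'n^'d"
  assumes n2: "CARD('n) \<ge> 2" and d2: "CARD('d) \<ge> 2" and C0: "C \<noteq> (\<lambda>_. 0)"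
    and prob: "\<forall>i. prob_vec (P$i)" and Ppos: "\<forall>i j. 0 < P$i$j"
    and feas: "\<forall>J. 0 \<le> Cx C x J" and objge: "objective P x \<ge> cmin C"
    and rows: "\<forall>i i'. rowsum x i = rowsum x i'"
  shows "sqrt (\<Sum>i\<in>UNIV. (norm (x$i))^2) < 2 * cmax C * sqrt (real CARD('n)) / pmin P"
proof -
  have b: "(\<Sum>i\<in>UNIV. (norm (x$i))^2) < 4 * (cmax C)^2 * real CARD('n) / (pmin P)^2"
    by (rule bound_c[OF assms])
  have pp: "0 < pmin P" using pmin_facts[OF n2 d2 prob Ppos] by simp
  have cp: "0 < cmax C" using cmax_facts[OF C0] by simp
  have eq: "4 * (cmax C)^2 * real CARD('n) / (pmin P)^2 = (2 * cmax C * sqrt (real CARD('n)) / pmin P)^2"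
    by (simp add: power_divide power_mult_distrib)
  have "sqrt (\<Sum>i\<in>UNIV. (norm (x$i))^2) < sqrt ((2 * cmax C * sqrt (real CARD('n)) / pmin P)^2)"
    using b unfolding eq by (rule real_sqrt_less_mono)
  also have "\<dots> = 2 * cmax C * sqrt (real CARD('n)) / pmin P"
    using pp cp by simp
  finally show ?thesis .
qed

lemma norm_x0_sq:
  fixes C :: "('d::finite \<Rightarrow> 'n::finite) \<Rightarrow> real"
  shows "(\<Sum>i\<in>UNIV. (norm (x0 C $ i))^2) = real CARD('n) * (cmin C - 1)^2 / real CARD('d)"
proof -
  have "(\<Sum>i\<in>UNIV. (norm (x0 C $ i))^2) = real CARD('d) * (real CARD('n) * ((cmin C - 1) / real CARD('d))^2)"
    by (simp add: norm2_vec x0_nth)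
  also have "\<dots> = real CARD('n) * (cmin C - 1)^2 / real CARD('d)"
    by (simp add: power2_eq_square)
  finally show ?thesis .
qed

lemma part_e:
  fixes C :: "('d::finite \<Rightarrow> 'n::finite) \<Rightarrow> real" and P x :: "real^'n^'d"
  assumes n2: "CARD('n) \<ge> 2" and d2: "CARD('d) \<ge> 2" and C0: "C \<noteq> (\<lambda>_. 0)"
    and prob: "\<forall>i. prob_vec (P$i)" and Ppos: "\<forall>i j. 0 < P$i$j"
    and feas: "\<forall>J. 0 \<le> Cx C x J" and objge: "objective P x \<ge> cmin C"
    and rows: "\<forall>i i'. rowsum x i = rowsum x i'"
  shows "(\<Sum>i\<in>UNIV. (norm (x$i - x0 C $i))^2) < rsq C P"
proof -
  define c where "c = cmax C"
  define nn where "nn = real CARD('n)"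
  define dd where "dd = real CARD('d)"
  define pm where "pm = pmin P"
  have b: "(\<Sum>i\<in>UNIV. (norm (x$i))^2) < 4 * c^2 * nn / pm^2"
    unfolding c_def nn_def pm_def by (rule bound_c[OF assms])
  have pp: "0 < pm" "pm \<le> 1/4" using pmin_facts[OF n2 d2 prob Ppos] by (auto simp: pm_def)
  note cf = cmax_facts[OF C0, folded c_def]
  have tri: "(norm (a - b))^2 \<le> 2 * (norm a)^2 + 2 * (norm b)^2" for a b :: "real^'n"
  proof -
    have "norm (a - b) \<le> norm a + norm b" by (rule norm_triangle_ineq4)
    then have "(norm (a - b))^2 \<le> (norm a + norm b)^2" by (intro power_mono) auto
    also have "\<dots> \<le> 2 * (norm a)^2 + 2 * (norm b)^2"
      using zero_le_power2[of "norm a - norm b"] by (simp add: power2_eq_square algebra_simps)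
    finally show ?thesis .
  qed
  have "(\<Sum>i\<in>UNIV. (norm (x$i - x0 C $i))^2) \<le> (\<Sum>i\<in>UNIV. 2 * (norm (x$i))^2 + 2 * (norm (x0 C $ i))^2)"
    by (intro sum_mono tri)
  also have "\<dots> = 2 * (\<Sum>i\<in>UNIV. (norm (x$i))^2) + 2 * (nn * (cmin C - 1)^2 / dd)"
    by (simp add: sum.distrib sum_distrib_left[symmetric] norm_x0_sq nn_def dd_def)
  also have "\<dots> < 8 * c^2 * nn / pm^2 + nn * (2 * c^2 + 2)"
  proof -
    have "2 * (nn * (cmin C - 1)^2 / dd) \<le> nn * (cmin C - 1)^2"
    proof -
      have "0 \<le> nn * (cmin C - 1)^2" by (simp add: nn_def)
      moreover have "2 \<le> dd" using d2 by (simp add: dd_def)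
      ultimately have "2 * (nn * (cmin C - 1)^2) \<le> (nn * (cmin C - 1)^2) * dd"
        using mult_left_mono[of 2 dd "nn * (cmin C - 1)^2"] by (simp add: mult.commute)
      moreover have "0 < dd" using d2 by (simp add: dd_def)
      ultimately show ?thesis by (simp add: pos_divide_le_eq)
    qed
    moreover have "(cmin C - 1)^2 \<le> 2 * c^2 + 2"
    proof -
      have "\<bar>cmin C - 1\<bar> \<le> c + 1" using cf by auto
      then have "(cmin C - 1)^2 \<le> (c + 1)^2" by (metis abs_ge_zero power2_abs power_mono)
      also have "\<dots> \<le> 2 * c^2 + 2" using zero_le_power2[of "c - 1"] by (simp add: power2_eq_square algebra_simps)
      finally show ?thesis .
    qed
    then have "nn * (cmin C - 1)^2 \<le> nn * (2 * c^2 + 2)" by (intro mult_left_mono) (auto simp: nn_def)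
    ultimately show ?thesis using b by linarith
  qed
  also have "\<dots> \<le> (9 * c^2 + 1) * nn / pm^2"
  proof -
    have "16 \<le> 1 / pm^2"
    proof -
      have "pm^2 \<le> (1/4)^2" using pp by (intro power_mono) auto
      then show ?thesis using pp by (simp add: field_simps power2_eq_square)
    qed
    then have "nn * (2 * c^2 + 2) \<le> nn * (c^2 + 1) * (1 / pm^2)"
      using mult_left_mono[of 2 "1/pm^2" "nn * (c^2+1)"] by (simp add: nn_def algebra_simps)
    moreover have "(9 * c^2 + 1) * nn / pm^2 = 8 * c^2 * nn / pm^2 + nn * (c^2 + 1) * (1 / pm^2)"
      by (simp add: add_divide_distrib algebra_simps)
    ultimately show ?thesis by linarith
  qed
  finally show ?thesis by (simp add: rsq_def c_def nn_def pm_def)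
qed

lemma deriv_chain3:
  fixes \<phi> \<phi>1 \<phi>2 \<phi>3 :: "real \<Rightarrow> real"
  assumes N: "open N" "t0 \<in> N"
    and d1: "\<And>t. t \<in> N \<Longrightarrow> (\<phi> has_real_derivative \<phi>1 t) (at t)"
    and d2: "\<And>t. t \<in> N \<Longrightarrow> (\<phi>1 has_real_derivative \<phi>2 t) (at t)"
    and d3: "\<And>t. t \<in> N \<Longrightarrow> (\<phi>2 has_real_derivative \<phi>3 t) (at t)"
  shows "(deriv ^^ 1) \<phi> t0 = \<phi>1 t0" "(deriv ^^ 2) \<phi> t0 = \<phi>2 t0" "(deriv ^^ 3) \<phi> t0 = \<phi>3 t0"
proof -
  have e1: "deriv \<phi> t = \<phi>1 t" if "t \<in> N" for t using d1[OF that] by (rule DERIV_imp_deriv)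
  have e2: "deriv (deriv \<phi>) t = \<phi>2 t" if "t \<in> N" for t
  proof -
    have "deriv (deriv \<phi>) t = deriv \<phi>1 t"
      by (rule deriv_cong_ev) (use eventually_nhds_in_open[OF N(1) that] e1 in \<open>auto elim: eventually_mono\<close>)
    also have "\<dots> = \<phi>2 t" using d2[OF that] by (rule DERIV_imp_deriv)
    finally show ?thesis .
  qed
  have e3: "deriv (deriv (deriv \<phi>)) t = \<phi>3 t" if "t \<in> N" for t
  proof -
    have "deriv (deriv (deriv \<phi>)) t = deriv \<phi>2 t"
      by (rule deriv_cong_ev) (use eventually_nhds_in_open[OF N(1) that] e2 in \<open>auto elim: eventually_mono\<close>)
    also have "\<dots> = \<phi>3 t" using d3[OF that] by (rule DERIV_imp_deriv)
    finally show ?thesis .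
  qed
  show "(deriv ^^ 1) \<phi> t0 = \<phi>1 t0" using e1 N(2) by simp
  show "(deriv ^^ 2) \<phi> t0 = \<phi>2 t0" using e2 N(2) by (simp add: numeral_2_eq_2)
  show "(deriv ^^ 3) \<phi> t0 = \<phi>3 t0" using e3 N(2) by (simp add: numeral_3_eq_3)
qed

lemma ln_quad_d1:
  assumes "0 < a + b*t + c*t^2"
  shows "((\<lambda>t. ln (a + b*t + c*t^2)) has_real_derivative (b + 2*c*t) / (a + b*t + c*t^2)) (at t)"
  using assms by (auto intro!: derivative_eq_intros simp: power2_eq_square algebra_simps)

lemma ln_quad_d2:
  assumes "0 < a + b*t + c*t^2"
  shows "((\<lambda>t. (b + 2*c*t) / (a + b*t + c*t^2)) has_real_derivative
           (2*c*(a + b*t + c*t^2) - (b + 2*c*t)^2) / (a + b*t + c*t^2)^2) (at t)"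
  using assms by (auto intro!: derivative_eq_intros simp: power2_eq_square field_simps)

lemma quot_d3_gen:
  fixes Q L :: "real \<Rightarrow> real"
  assumes "(Q has_real_derivative L t) (at t)" "(L has_real_derivative 2*c) (at t)" "Q t \<noteq> 0"
  shows "((\<lambda>t. (2*c*Q t - (L t)^2) / (Q t)^2) has_real_derivative
           (2*(L t)^3 - 6*c*(L t)*(Q t)) / (Q t)^3) (at t)"
proof -
  have "((\<lambda>t. (2*c*Q t - (L t)^2) / (Q t)^2) has_real_derivative
     ((2*c*L t - 2 * L t * (2*c)) * (Q t)^2 - (2*c*Q t - (L t)^2) * (2 * Q t * L t)) / ((Q t)^2 * (Q t)^2)) (at t)"
    using assms by (auto intro!: derivative_eq_intros simp: power2_eq_square)
  moreover have "((2*c*L t - 2 * L t * (2*c)) * (Q t)^2 - (2*c*Q t - (L t)^2) * (2 * Q t * L t)) / ((Q t)^2 * (Q t)^2)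
      = (2*(L t)^3 - 6*c*(L t)*(Q t)) / (Q t)^3"
    using assms(3) by (simp add: field_simps power2_eq_square power3_eq_cube)
  ultimately show ?thesis by simp
qed

lemma ln_quad_d3:
  assumes "0 < a + b*t + c*t^2"
  shows "((\<lambda>t. (2*c*(a + b*t + c*t^2) - (b + 2*c*t)^2) / (a + b*t + c*t^2)^2) has_real_derivative
           (2*(b + 2*c*t)^3 - 6*c*(b + 2*c*t)*(a + b*t + c*t^2)) / (a + b*t + c*t^2)^3) (at t)"
proof (rule quot_d3_gen[where Q="\<lambda>t. a + b*t + c*t^2" and L="\<lambda>t. b + 2*c*t"])
  show "((\<lambda>t. a + b*t + c*t^2) has_real_derivative b + 2*c*t) (at t)"
    by (auto intro!: derivative_eq_intros simp: power2_eq_square algebra_simps)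
  show "((\<lambda>t. b + 2*c*t) has_real_derivative 2*c) (at t)"
    by (auto intro!: derivative_eq_intros)
qed (use assms in auto)

lemma dderiv_logsum:
  fixes a b c :: "'k \<Rightarrow> real" and \<kappa> :: real
  assumes K: "finite K" and apos: "\<forall>k\<in>K. 0 < a k"
  defines "\<phi> \<equiv> \<lambda>t. \<kappa> - (\<Sum>k\<in>K. ln (a k + b k * t + c k * t^2))"
  shows "(deriv ^^ 1) \<phi> 0 = - (\<Sum>k\<in>K. b k / a k)"
    "(deriv ^^ 2) \<phi> 0 = - (\<Sum>k\<in>K. (2 * c k * a k - (b k)^2) / (a k)^2)"
    "(deriv ^^ 3) \<phi> 0 = - (\<Sum>k\<in>K. (2 * (b k)^3 - 6 * c k * b k * a k) / (a k)^3)"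
proof -
  define Q where "Q k t = a k + b k * t + c k * t^2" for k t
  define N where "N = (\<Inter>k\<in>K. {t. 0 < Q k t})"
  have oN: "open N" unfolding N_def Q_def
    by (intro open_INT K ballI open_Collect_less) (auto intro!: continuous_intros)
  have N0: "0 \<in> N" using apos by (simp add: N_def Q_def)
  define \<phi>1 where "\<phi>1 t = - (\<Sum>k\<in>K. (b k + 2 * c k * t) / Q k t)" for t
  define \<phi>2 where "\<phi>2 t = - (\<Sum>k\<in>K. (2 * c k * Q k t - (b k + 2 * c k * t)^2) / (Q k t)^2)" for t
  define \<phi>3 where "\<phi>3 t = - (\<Sum>k\<in>K. (2 * (b k + 2 * c k * t)^3 - 6 * c k * (b k + 2 * c k * t) * Q k t) / (Q k t)^3)" for t
  have pos: "0 < a k + b k * t + c k * t^2" if "t \<in> N" "k \<in> K" for t k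
    using that by (auto simp: N_def Q_def)
  have r: "(deriv ^^ 1) \<phi> 0 = \<phi>1 0 \<and> (deriv ^^ 2) \<phi> 0 = \<phi>2 0 \<and> (deriv ^^ 3) \<phi> 0 = \<phi>3 0"
  proof (intro conjI)
    note dc = deriv_chain3[OF oN N0, of \<phi> \<phi>1 \<phi>2 \<phi>3]
    have D1: "(\<phi> has_real_derivative \<phi>1 t) (at t)" if "t \<in> N" for t
    proof -
      have "((\<lambda>t. \<Sum>k\<in>K. ln (a k + b k * t + c k * t^2)) has_real_derivative
              (\<Sum>k\<in>K. (b k + 2 * c k * t) / (a k + b k * t + c k * t^2))) (at t)"
        by (rule DERIV_sum) (rule ln_quad_d1[OF pos[OF that]])
      from DERIV_diff[OF DERIV_const[of \<kappa>] this] show ?thesis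
        unfolding \<phi>_def \<phi>1_def Q_def by simp
    qed
    have D2: "(\<phi>1 has_real_derivative \<phi>2 t) (at t)" if "t \<in> N" for t
    proof -
      have "((\<lambda>t. \<Sum>k\<in>K. (b k + 2 * c k * t) / (a k + b k * t + c k * t^2)) has_real_derivative
              (\<Sum>k\<in>K. (2*c k*(a k + b k*t + c k*t^2) - (b k + 2*c k*t)^2) / (a k + b k*t + c k*t^2)^2)) (at t)"
        by (rule DERIV_sum) (rule ln_quad_d2[OF pos[OF that]])
      from DERIV_minus[OF this] show ?thesis
        unfolding \<phi>1_def \<phi>2_def Q_def by simp
    qed
    have D3: "(\<phi>2 has_real_derivative \<phi>3 t) (at t)" if "t \<in> N" for t
    proof -
      have "((\<lambda>t. \<Sum>k\<in>K. (2*c k*(a k + b k*t + c k*t^2) - (b k + 2*c k*t)^2) / (a k + b k*t + c k*t^2)^2) has_real_derivative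
              (\<Sum>k\<in>K. (2*(b k + 2*c k*t)^3 - 6*c k*(b k + 2*c k*t)*(a k + b k*t + c k*t^2)) / (a k + b k*t + c k*t^2)^3)) (at t)"
        by (rule DERIV_sum) (rule ln_quad_d3[OF pos[OF that]])
      from DERIV_minus[OF this] show ?thesis
        unfolding \<phi>2_def \<phi>3_def Q_def by (simp add: mult.assoc)
    qed
    show "(deriv ^^ 1) \<phi> 0 = \<phi>1 0" "(deriv ^^ 2) \<phi> 0 = \<phi>2 0" "(deriv ^^ 3) \<phi> 0 = \<phi>3 0"
      using dc D1 D2 D3 by blast+
  qed
  show "(deriv ^^ 1) \<phi> 0 = - (\<Sum>k\<in>K. b k / a k)"
    using r by (simp add: \<phi>1_def Q_def)
  show "(deriv ^^ 2) \<phi> 0 = - (\<Sum>k\<in>K. (2 * c k * a k - (b k)^2) / (a k)^2)"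
    using r by (simp add: \<phi>2_def Q_def)
  show "(deriv ^^ 3) \<phi> 0 = - (\<Sum>k\<in>K. (2 * (b k)^3 - 6 * c k * b k * a k) / (a k)^3)"
    using r by (simp add: \<phi>3_def Q_def)
qed

definition Lb :: "'a::euclidean_space \<Rightarrow> 'w::real_normed_vector \<Rightarrow> 'a \<Rightarrow>\<^sub>L 'w" where
  "Lb b w = blinfun_compose (blinfun_scaleR_left w) (blinfun_inner_left b)"

lemma Lb_apply: "blinfun_apply (Lb b w) h = (h \<bullet> b) *\<^sub>R w"
  by (simp add: Lb_def)

lemma bounded_linear_Lb: "bounded_linear (Lb b)"
  unfolding Lb_def
  by (rule bounded_linear_compose[OF bounded_bilinear.bounded_linear_left[OF bounded_bilinear_blinfun_compose]
        bounded_linear_blinfun_scaleR_left])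

lemma blinfun_repr:
  fixes T :: "'a::euclidean_space \<Rightarrow>\<^sub>L 'w::real_normed_vector"
  shows "T = (\<Sum>b\<in>Basis. Lb b (blinfun_apply T b))"
proof (rule blinfun_eqI)
  fix h
  have "blinfun_apply (\<Sum>b\<in>Basis. Lb b (blinfun_apply T b)) h = (\<Sum>b\<in>Basis. (h \<bullet> b) *\<^sub>R blinfun_apply T b)"
    by (simp add: blinfun.sum_left Lb_apply)
  also have "\<dots> = blinfun_apply T (\<Sum>b\<in>Basis. (h \<bullet> b) *\<^sub>R b)"
    by (simp add: blinfun.sum_right blinfun.scaleR_right)
  also have "\<dots> = blinfun_apply T h" by (simp add: euclidean_representation)
  finally show "blinfun_apply T h = blinfun_apply (\<Sum>b\<in>Basis. Lb b (blinfun_apply T b)) h" by simp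
qed

lemma has_derivative_blinfun_pw:
  fixes F :: "'x::real_normed_vector \<Rightarrow> ('a::euclidean_space \<Rightarrow>\<^sub>L 'w::real_normed_vector)"
    and G :: "'x \<Rightarrow> ('a \<Rightarrow>\<^sub>L 'w)"
  assumes "bounded_linear G"
    and "\<And>l. ((\<lambda>x. blinfun_apply (F x) l) has_derivative (\<lambda>h. blinfun_apply (G h) l)) (at x)"
  shows "(F has_derivative G) (at x)"
proof -
  have F: "F = (\<lambda>x. \<Sum>b\<in>Basis. Lb b (blinfun_apply (F x) b))"
    by (rule ext) (rule blinfun_repr)
  have G: "G = (\<lambda>h. \<Sum>b\<in>Basis. Lb b (blinfun_apply (G h) b))"
    by (rule ext) (rule blinfun_repr)
  have "((\<lambda>x. \<Sum>b\<in>Basis. Lb b (blinfun_apply (F x) b)) has_derivative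
         (\<lambda>h. \<Sum>b\<in>Basis. Lb b (blinfun_apply (G h) b))) (at x)"
    by (intro has_derivative_sum bounded_linear.has_derivative[OF bounded_linear_Lb] assms(2))
  then show ?thesis using F G by simp
qed

lemma continuous_on_blinfun_pw:
  fixes F :: "'x::topological_space \<Rightarrow> ('a::euclidean_space \<Rightarrow>\<^sub>L 'w::real_normed_vector)"
  assumes "\<And>l. continuous_on U (\<lambda>x. blinfun_apply (F x) l)"
  shows "continuous_on U F"
proof -
  have F: "F = (\<lambda>x. \<Sum>b\<in>Basis. Lb b (blinfun_apply (F x) b))"
    by (rule ext) (rule blinfun_repr)
  have "continuous_on U (\<lambda>x. \<Sum>b\<in>Basis. Lb b (blinfun_apply (F x) b))"
    by (intro continuous_on_sum bounded_linear.continuous_on[OF bounded_linear_Lb] assms)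
  then show ?thesis by (subst F)
qed

lemma bounded_linear_to_blinfun:
  fixes g :: "'a::euclidean_space \<Rightarrow> 'b::euclidean_space \<Rightarrow> 'w::real_normed_vector"
  assumes "\<And>h. bounded_linear (g h)" "\<And>l. linear (\<lambda>h. g h l)"
  shows "bounded_linear (\<lambda>h. Blinfun (g h))"
proof -
  have ap: "blinfun_apply (Blinfun (g h)) = g h" for h by (rule bounded_linear_Blinfun_apply[OF assms(1)])
  have "linear (\<lambda>h. Blinfun (g h))"
  proof (rule linearI)
    fix h1 h2
    show "Blinfun (g (h1 + h2)) = Blinfun (g h1) + Blinfun (g h2)"
      by (rule blinfun_eqI) (simp add: ap plus_blinfun.rep_eq linear_add[OF assms(2)])
  next
    fix r h
    show "Blinfun (g (r *\<^sub>R h)) = r *\<^sub>R Blinfun (g h)"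
      by (rule blinfun_eqI) (simp add: ap scaleR_blinfun.rep_eq linear_scale[OF assms(2)])
  qed
  then show ?thesis by (simp add: linear_conv_bounded_linear)
qed

lemma hd_quot2:
  fixes N q :: "'a::real_normed_vector \<Rightarrow> real"
  assumes "(N has_derivative dN) (at x)" "(q has_derivative dq) (at x)" "q x \<noteq> 0"
  shows "((\<lambda>x. N x / (q x)^2) has_derivative (\<lambda>h. (dN h * q x - 2 * N x * dq h) / (q x)^3)) (at x)"
proof -
  have "((\<lambda>x. N x / (q x * q x)) has_derivative
      (\<lambda>h. (dN h * (q x * q x) - N x * (q x * dq h + dq h * q x)) / ((q x * q x) * (q x * q x)))) (at x)"
    by (intro has_derivative_divide' has_derivative_mult assms) (use assms(3) in simp)
  moreover have "(\<lambda>h. (dN h * (q x * q x) - N x * (q x * dq h + dq h * q x)) / ((q x * q x) * (q x * q x)))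
      = (\<lambda>h. (dN h * q x - 2 * N x * dq h) / (q x)^3)"
    using assms(3) by (intro ext) (simp add: field_simps power3_eq_cube)
  ultimately show ?thesis by (simp add: power2_eq_square)
qed

lemma hd_quot1:
  fixes N q :: "'a::real_normed_vector \<Rightarrow> real"
  assumes "(N has_derivative dN) (at x)" "(q has_derivative dq) (at x)" "q x \<noteq> 0"
  shows "((\<lambda>x. N x / q x) has_derivative (\<lambda>h. (dN h * q x - N x * dq h) / (q x)^2)) (at x)"
  using has_derivative_divide'[OF assms] by (simp add: power2_eq_square)

context
  fixes \<alpha> \<gamma> :: real and \<beta> :: "'a::euclidean_space"
begin

definition "qq x = \<alpha> + \<beta> \<bullet> x + \<gamma> * (x \<bullet> x)"
definition "gl x l = \<beta> \<bullet> l + 2 * \<gamma> * (x \<bullet> l)"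
definition "T1 x l = gl x l / qq x"
definition "T2 x h l = (2 * \<gamma> * (h \<bullet> l) * qq x - gl x h * gl x l) / (qq x)^2"
definition "NN x l m = 2 * \<gamma> * (l \<bullet> m) * qq x - gl x l * gl x m"
definition "dNN x h l m = 2 * \<gamma> * (l \<bullet> m) * gl x h - (2 * \<gamma> * (h \<bullet> l) * gl x m + gl x l * (2 * \<gamma> * (h \<bullet> m)))"
definition "T3 x h l m = (dNN x h l m * qq x - 2 * NN x l m * gl x h) / (qq x)^3"

lemma qq_deriv: "(qq has_derivative (\<lambda>h. gl x h)) (at x)"
  unfolding qq_def gl_def
  by (auto intro!: derivative_eq_intros simp: inner_commute algebra_simps)

lemma gl_deriv: "((\<lambda>x. gl x l) has_derivative (\<lambda>h. 2 * \<gamma> * (h \<bullet> l))) (at x)"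
  unfolding gl_def by (auto intro!: derivative_eq_intros)

lemma ln_qq_deriv:
  assumes "0 < qq x"
  shows "((\<lambda>x. ln (qq x)) has_derivative (\<lambda>h. T1 x h)) (at x)"
proof -
  have "((\<lambda>x. ln (qq x)) has_derivative (\<lambda>h. gl x h * inverse (qq x))) (at x)"
    by (rule DERIV_compose_FDERIV[OF DERIV_ln[OF assms] qq_deriv])
  then show ?thesis by (simp add: T1_def divide_inverse)
qed

lemma T1_deriv:
  assumes "0 < qq x"
  shows "((\<lambda>x. T1 x l) has_derivative (\<lambda>h. T2 x h l)) (at x)"
proof -
  have "((\<lambda>x. gl x l / qq x) has_derivative (\<lambda>h. (2 * \<gamma> * (h \<bullet> l) * qq x - gl x l * gl x h) / (qq x)^2)) (at x)"
    by (rule hd_quot1[OF gl_deriv qq_deriv]) (use assms in simp)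
  then show ?thesis unfolding T1_def T2_def by (simp add: mult.commute)
qed

lemma NN_deriv: "((\<lambda>x. NN x l m) has_derivative (\<lambda>h. dNN x h l m)) (at x)"
  unfolding NN_def dNN_def
  by (auto intro!: derivative_eq_intros gl_deriv qq_deriv simp: algebra_simps)

lemma T2_deriv:
  assumes "0 < qq x"
  shows "((\<lambda>x. T2 x l m) has_derivative (\<lambda>h. T3 x h l m)) (at x)"
proof -
  have "T2 = (\<lambda>x l m. NN x l m / (qq x)^2)" by (intro ext) (simp add: T2_def NN_def)
  moreover have "((\<lambda>x. NN x l m / (qq x)^2) has_derivative (\<lambda>h. T3 x h l m)) (at x)"
    unfolding T3_def by (rule hd_quot2[OF NN_deriv qq_deriv]) (use assms in simp)
  ultimately show ?thesis by simp
qed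

lemma T3_cont: "continuous_on {x. 0 < qq x} (\<lambda>x. T3 x h l m)"
  unfolding T3_def dNN_def NN_def gl_def qq_def
  by (intro continuous_intros) auto

lemma T1_lin: "bounded_linear (T1 x)"
  unfolding T1_def gl_def divide_inverse
  by (intro bounded_linear_intros)

lemma T2_lin1: "bounded_linear (T2 x h)"
  unfolding T2_def gl_def divide_inverse
  by (intro bounded_linear_intros)

lemma T2_lin2: "linear (\<lambda>h. T2 x h l)"
  unfolding T2_def gl_def divide_inverse
  by (intro bounded_linear.linear bounded_linear_intros)

lemma T3_lin3: "bounded_linear (T3 x h l)"
  unfolding T3_def dNN_def NN_def gl_def divide_inverse
  by (intro bounded_linear_intros)

lemma T3_lin2: "linear (\<lambda>l. T3 x h l m)"
  unfolding T3_def dNN_def NN_def gl_def divide_inverse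
  by (intro bounded_linear.linear bounded_linear_intros)

lemma T3_lin1: "linear (\<lambda>h. T3 x h l m)"
  unfolding T3_def dNN_def NN_def gl_def divide_inverse
  by (intro bounded_linear.linear bounded_linear_intros)

end

lemma C3_logsum:
  fixes \<alpha> \<gamma> :: "'k \<Rightarrow> real" and \<beta> :: "'k \<Rightarrow> 'a::euclidean_space" and \<kappa> :: real
  assumes K: "finite K"
  defines "U \<equiv> {x. \<forall>k\<in>K. 0 < qq (\<alpha> k) (\<gamma> k) (\<beta> k) x}"
  shows "\<exists>(f1::'a \<Rightarrow> ('a \<Rightarrow>\<^sub>L real)) (f2::'a \<Rightarrow> ('a \<Rightarrow>\<^sub>L 'a \<Rightarrow>\<^sub>L real))
        (f3::'a \<Rightarrow> ('a \<Rightarrow>\<^sub>L 'a \<Rightarrow>\<^sub>L 'a \<Rightarrow>\<^sub>L real)).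
      (\<forall>x\<in>U. ((\<lambda>x. \<kappa> - (\<Sum>k\<in>K. ln (qq (\<alpha> k) (\<gamma> k) (\<beta> k) x))) has_derivative blinfun_apply (f1 x)) (at x)
           \<and> (f1 has_derivative blinfun_apply (f2 x)) (at x)
           \<and> (f2 has_derivative blinfun_apply (f3 x)) (at x))
      \<and> continuous_on U f3"
proof -
  define F1 where "F1 x h = - (\<Sum>k\<in>K. T1 (\<alpha> k) (\<gamma> k) (\<beta> k) x h)" for x h
  define F2 where "F2 x h l = - (\<Sum>k\<in>K. T2 (\<alpha> k) (\<gamma> k) (\<beta> k) x h l)" for x h l
  define F3 where "F3 x h l m = - (\<Sum>k\<in>K. T3 (\<alpha> k) (\<gamma> k) (\<beta> k) x h l m)" for x h l m
  have BL1: "bounded_linear (F1 x)" for x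
    unfolding F1_def by (intro bounded_linear_minus bounded_linear_sum T1_lin)
  have BL2: "bounded_linear (F2 x h)" for x h
    unfolding F2_def by (intro bounded_linear_minus bounded_linear_sum T2_lin1)
  have L2: "linear (\<lambda>h. F2 x h l)" for x l
    unfolding F2_def linear_conv_bounded_linear
    by (intro bounded_linear_minus bounded_linear_sum T2_lin2[unfolded linear_conv_bounded_linear])
  have BL3: "bounded_linear (F3 x h l)" for x h l
    unfolding F3_def by (intro bounded_linear_minus bounded_linear_sum T3_lin3)
  have L3l: "linear (\<lambda>l. F3 x h l m)" for x h m
    unfolding F3_def linear_conv_bounded_linear
    by (intro bounded_linear_minus bounded_linear_sum T3_lin2[unfolded linear_conv_bounded_linear])
  have L3h: "linear (\<lambda>h. F3 x h l m)" for x l m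
    unfolding F3_def linear_conv_bounded_linear
    by (intro bounded_linear_minus bounded_linear_sum T3_lin1[unfolded linear_conv_bounded_linear])
  define f1 where "f1 x = Blinfun (F1 x)" for x
  define f2 where "f2 x = Blinfun (\<lambda>h. Blinfun (F2 x h))" for x
  define f3 where "f3 x = Blinfun (\<lambda>h. Blinfun (\<lambda>l. Blinfun (F3 x h l)))" for x
  have BLf2: "bounded_linear (\<lambda>h. Blinfun (F2 x h))" for x
    by (rule bounded_linear_to_blinfun[OF BL2 L2])
  have BLf3a: "bounded_linear (\<lambda>l. Blinfun (F3 x h l))" for x h
    by (rule bounded_linear_to_blinfun[OF BL3 L3l])
  have BLf3b: "bounded_linear (\<lambda>h. Blinfun (F3 x h l))" for x l
    by (rule bounded_linear_to_blinfun[OF BL3 L3h])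
  have BLf3: "bounded_linear (\<lambda>h. Blinfun (\<lambda>l. Blinfun (F3 x h l)))" for x
    by (rule bounded_linear_to_blinfun[OF BLf3a bounded_linear.linear[OF BLf3b]])
  have ap1: "blinfun_apply (f1 x) = F1 x" for x unfolding f1_def by (rule bounded_linear_Blinfun_apply[OF BL1])
  have ap2: "blinfun_apply (f2 x) h = Blinfun (F2 x h)" for x h
    unfolding f2_def by (simp add: bounded_linear_Blinfun_apply[OF BLf2])
  have ap2': "blinfun_apply (blinfun_apply (f2 x) h) l = F2 x h l" for x h l
    unfolding ap2 by (simp add: bounded_linear_Blinfun_apply[OF BL2])
  have ap3: "blinfun_apply (f3 x) h = Blinfun (\<lambda>l. Blinfun (F3 x h l))" for x h
    unfolding f3_def by (simp add: bounded_linear_Blinfun_apply[OF BLf3])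
  have ap3': "blinfun_apply (blinfun_apply (f3 x) h) l = Blinfun (F3 x h l)" for x h l
    unfolding ap3 by (simp add: bounded_linear_Blinfun_apply[OF BLf3a])
  have ap3'': "blinfun_apply (blinfun_apply (blinfun_apply (f3 x) h) l) m = F3 x h l m" for x h l m
    unfolding ap3' by (simp add: bounded_linear_Blinfun_apply[OF BL3])
  have posk: "0 < qq (\<alpha> k) (\<gamma> k) (\<beta> k) x" if "x \<in> U" "k \<in> K" for x k
    using that by (auto simp: U_def)
  have "\<forall>x\<in>U. ((\<lambda>x. \<kappa> - (\<Sum>k\<in>K. ln (qq (\<alpha> k) (\<gamma> k) (\<beta> k) x))) has_derivative blinfun_apply (f1 x)) (at x)
           \<and> (f1 has_derivative blinfun_apply (f2 x)) (at x)
           \<and> (f2 has_derivative blinfun_apply (f3 x)) (at x)"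
  proof (intro ballI conjI)
    fix x assume x: "x \<in> U"
    have "((\<lambda>x. \<kappa> - (\<Sum>k\<in>K. ln (qq (\<alpha> k) (\<gamma> k) (\<beta> k) x))) has_derivative (\<lambda>h. 0 - (\<Sum>k\<in>K. T1 (\<alpha> k) (\<gamma> k) (\<beta> k) x h))) (at x)"
      by (intro has_derivative_diff has_derivative_const has_derivative_sum ln_qq_deriv posk[OF x])
    then show "((\<lambda>x. \<kappa> - (\<Sum>k\<in>K. ln (qq (\<alpha> k) (\<gamma> k) (\<beta> k) x))) has_derivative blinfun_apply (f1 x)) (at x)"
      by (simp add: ap1 F1_def[abs_def])
    show "(f1 has_derivative blinfun_apply (f2 x)) (at x)"
    proof (rule has_derivative_blinfun_pw)
      show "bounded_linear (blinfun_apply (f2 x))" by (rule blinfun.bounded_linear_right)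
      fix l
      have "((\<lambda>y. - (\<Sum>k\<in>K. T1 (\<alpha> k) (\<gamma> k) (\<beta> k) y l)) has_derivative (\<lambda>h. - (\<Sum>k\<in>K. T2 (\<alpha> k) (\<gamma> k) (\<beta> k) x h l))) (at x)"
        by (intro has_derivative_minus has_derivative_sum T1_deriv posk[OF x])
      then show "((\<lambda>y. blinfun_apply (f1 y) l) has_derivative (\<lambda>h. blinfun_apply (blinfun_apply (f2 x) h) l)) (at x)"
        by (simp add: ap1 ap2' F1_def F2_def)
    qed
    show "(f2 has_derivative blinfun_apply (f3 x)) (at x)"
    proof (rule has_derivative_blinfun_pw)
      show "bounded_linear (blinfun_apply (f3 x))" by (rule blinfun.bounded_linear_right)
      fix l
      show "((\<lambda>y. blinfun_apply (f2 y) l) has_derivative (\<lambda>h. blinfun_apply (blinfun_apply (f3 x) h) l)) (at x)"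
        unfolding ap2 ap3'
      proof (rule has_derivative_blinfun_pw)
        show "bounded_linear (\<lambda>h. Blinfun (F3 x h l))" by (rule BLf3b)
        fix m
        have "((\<lambda>y. - (\<Sum>k\<in>K. T2 (\<alpha> k) (\<gamma> k) (\<beta> k) y l m)) has_derivative (\<lambda>h. - (\<Sum>k\<in>K. T3 (\<alpha> k) (\<gamma> k) (\<beta> k) x h l m))) (at x)"
          by (intro has_derivative_minus has_derivative_sum T2_deriv posk[OF x])
        then show "((\<lambda>y. blinfun_apply (Blinfun (F2 y l)) m) has_derivative (\<lambda>h. blinfun_apply (Blinfun (F3 x h l)) m)) (at x)"
          by (simp add: bounded_linear_Blinfun_apply[OF BL2] bounded_linear_Blinfun_apply[OF BL3] F2_def F3_def)
      qed
    qed
  qed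
  moreover have "continuous_on U f3"
  proof (rule continuous_on_blinfun_pw)
    fix h
    show "continuous_on U (\<lambda>x. blinfun_apply (f3 x) h)"
    proof (rule continuous_on_blinfun_pw)
      fix l
      show "continuous_on U (\<lambda>x. blinfun_apply (blinfun_apply (f3 x) h) l)"
      proof (rule continuous_on_blinfun_pw)
        fix m
        have "continuous_on U (\<lambda>x. - (\<Sum>k\<in>K. T3 (\<alpha> k) (\<gamma> k) (\<beta> k) x h l m))"
        proof (intro continuous_on_minus continuous_on_sum)
          fix k assume "k \<in> K"
          then have "U \<subseteq> {x. 0 < qq (\<alpha> k) (\<gamma> k) (\<beta> k) x}" by (auto simp: U_def)
          then show "continuous_on U (\<lambda>x. T3 (\<alpha> k) (\<gamma> k) (\<beta> k) x h l m)"
            by (rule continuous_on_subset[OF T3_cont])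
        qed
        then show "continuous_on U (\<lambda>x. blinfun_apply (blinfun_apply (blinfun_apply (f3 x) h) l) m)"
          by (simp add: ap3'' F3_def)
      qed
    qed
  qed
  ultimately show ?thesis by blast
qed

lemma qq_concave:
  fixes t :: real and x y :: "'a::euclidean_space"
  assumes "\<gamma> \<le> 0" "0 \<le> t" "t \<le> 1"
  shows "(1 - t) * qq \<alpha> \<gamma> \<beta> x + t * qq \<alpha> \<gamma> \<beta> y \<le> qq \<alpha> \<gamma> \<beta> ((1 - t) *\<^sub>R x + t *\<^sub>R y)"
proof -
  define z where "z = (1 - t) *\<^sub>R x + t *\<^sub>R y"
  have id: "(1 - t) * (x \<bullet> x) + t * (y \<bullet> y) - z \<bullet> z = t * (1 - t) * ((x - y) \<bullet> (x - y))"
    by (simp add: z_def inner_add_left inner_add_right inner_diff_left inner_diff_right inner_commute algebra_simps)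
  have nn: "0 \<le> t * (1 - t) * ((x - y) \<bullet> (x - y))" using assms by simp
  have "qq \<alpha> \<gamma> \<beta> z - ((1 - t) * qq \<alpha> \<gamma> \<beta> x + t * qq \<alpha> \<gamma> \<beta> y)
        = - \<gamma> * ((1 - t) * (x \<bullet> x) + t * (y \<bullet> y) - z \<bullet> z)"
    by (simp add: qq_def z_def inner_add_right algebra_simps)
  also have "\<dots> \<ge> 0" unfolding id using assms nn by (simp add: mult_nonpos_nonneg)
  finally show ?thesis by (simp add: z_def)
qed

lemma neg_ln_qq_convex:
  assumes "convex S" "\<And>x. x \<in> S \<Longrightarrow> 0 < qq \<alpha> \<gamma> \<beta> x" "\<gamma> \<le> 0"
  shows "convex_on S (\<lambda>x. - ln (qq \<alpha> \<gamma> \<beta> x))"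
proof (rule convex_onI[OF _ assms(1)])
  fix t :: real and x y assume t: "0 < t" "t < 1" and xy: "x \<in> S" "y \<in> S"
  have zS: "(1 - t) *\<^sub>R x + t *\<^sub>R y \<in> S"
    using assms(1) xy t by (simp add: convex_alt)
  have qx: "0 < qq \<alpha> \<gamma> \<beta> x" and qy: "0 < qq \<alpha> \<gamma> \<beta> y" using xy assms(2) by auto
  have cc: "0 < (1 - t) * qq \<alpha> \<gamma> \<beta> x + t * qq \<alpha> \<gamma> \<beta> y"
    using t qx qy by (simp add: add_pos_pos)
  have "(1 - t) * ln (qq \<alpha> \<gamma> \<beta> x) + t * ln (qq \<alpha> \<gamma> \<beta> y) \<le> ln ((1 - t) * qq \<alpha> \<gamma> \<beta> x + t * qq \<alpha> \<gamma> \<beta> y)"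
    using concave_onD[OF ln_concave, of t "qq \<alpha> \<gamma> \<beta> x" "qq \<alpha> \<gamma> \<beta> y"] t qx qy by simp
  also have "\<dots> \<le> ln (qq \<alpha> \<gamma> \<beta> ((1 - t) *\<^sub>R x + t *\<^sub>R y))"
  proof -
    have le: "(1 - t) * qq \<alpha> \<gamma> \<beta> x + t * qq \<alpha> \<gamma> \<beta> y \<le> qq \<alpha> \<gamma> \<beta> ((1 - t) *\<^sub>R x + t *\<^sub>R y)"
      by (rule qq_concave) (use t assms(3) in auto)
    have "0 < qq \<alpha> \<gamma> \<beta> ((1 - t) *\<^sub>R x + t *\<^sub>R y)" using zS assms(2) by blast
    then show ?thesis using le cc by simp
  qed
  finally show "- ln (qq \<alpha> \<gamma> \<beta> ((1 - t) *\<^sub>R x + t *\<^sub>R y)) \<le> (1 - t) * - ln (qq \<alpha> \<gamma> \<beta> x) + t * - ln (qq \<alpha> \<gamma> \<beta> y)"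
    by simp
qed

lemma convex_on_sum_fun:
  assumes "finite K" "convex S" "\<And>k. k \<in> K \<Longrightarrow> convex_on S (f k)"
  shows "convex_on S (\<lambda>x. \<Sum>k\<in>K. f k x)"
  using assms(1,3)
proof (induction K rule: finite_induct)
  case empty then show ?case using assms(2) by (simp add: convex_on_const)
next
  case (insert k F)
  then show ?case by (simp add: convex_on_add)
qed

lemma powr32: "0 \<le> X \<Longrightarrow> X powr (3/2) = X * sqrt X"
proof (cases "X = 0")
  case False
  assume "0 \<le> X"
  then have "0 < X" using False by simp
  have "X powr (3/2) = X powr 1 * X powr (1/2)" using powr_add[of X 1 "1/2"] by simp
  also have "\<dots> = X * X powr (1/2)" using \<open>0 < X\<close> by simp
  also have "\<dots> = X * sqrt X" using \<open>0 < X\<close> by (simp add: powr_half_sqrt)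
  finally show ?thesis .
qed simp

lemma sc_single:
  fixes A B :: real
  assumes "0 \<le> B"
  shows "\<bar>2 * A^3 + 3 * A * B\<bar> \<le> 2 * ((A^2 + B) * sqrt (A^2 + B))"
proof -
  define s where "s = sqrt (A^2 + B)"
  define a where "a = \<bar>A\<bar>"
  have h: "0 \<le> A^2 + B" using assms zero_le_power2[of A] by linarith
  have s0: "0 \<le> s" using h by (simp add: s_def)
  have ss: "s^2 = A^2 + B" using h by (simp add: s_def)
  have as: "a \<le> s"
  proof -
    have "a^2 \<le> s^2" using ss assms by (simp add: a_def)
    then show ?thesis using s0 abs_le_square_iff[of A s] by (simp add: a_def)
  qed
  have a0: "0 \<le> a" by (simp add: a_def)
  have "\<bar>2 * A^3 + 3 * A * B\<bar> = \<bar>A\<bar> * \<bar>2 * A^2 + 3 * B\<bar>"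
    by (simp add: power2_eq_square power3_eq_cube abs_mult[symmetric] algebra_simps)
  also have "\<dots> = a * (3 * s^2 - a^2)"
    using assms by (simp add: a_def ss algebra_simps)
  also have "\<dots> \<le> 2 * s^3"
  proof -
    have "0 \<le> (s - a)^2 * (2 * s + a)" using s0 a0 by simp
    then show ?thesis by (simp add: power2_eq_square power3_eq_cube algebra_simps)
  qed
  also have "\<dots> = 2 * ((A^2 + B) * sqrt (A^2 + B))"
  proof -
    have "s^3 = s^2 * s" by (simp add: power3_eq_cube power2_eq_square)
    then show ?thesis using ss by (simp add: s_def)
  qed
  finally show ?thesis .
qed

lemma sc_sum:
  fixes A B :: "'k \<Rightarrow> real"
  assumes K: "finite K" and B: "\<forall>k\<in>K. 0 \<le> B k"
  shows "\<bar>\<Sum>k\<in>K. - 2 * (A k)^3 - 3 * A k * B k\<bar> \<le> 2 * (\<Sum>k\<in>K. (A k)^2 + B k) powr (3/2)"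
proof -
  define X where "X k = (A k)^2 + B k" for k
  define S where "S = (\<Sum>k\<in>K. X k)"
  have X0: "0 \<le> X k" if "k \<in> K" for k using B that by (simp add: X_def)
  have S0: "0 \<le> S" unfolding S_def using X0 by (simp add: sum_nonneg)
  have XS: "X k \<le> S" if "k \<in> K" for k
    unfolding S_def using X0 that K by (intro member_le_sum[where f=X]) auto
  have "\<bar>\<Sum>k\<in>K. - 2 * (A k)^3 - 3 * A k * B k\<bar> \<le> (\<Sum>k\<in>K. \<bar>- 2 * (A k)^3 - 3 * A k * B k\<bar>)"
    by (rule sum_abs)
  also have "\<dots> \<le> (\<Sum>k\<in>K. 2 * (X k * sqrt (X k)))"
  proof (rule sum_mono)
    fix k assume "k \<in> K"
    have "\<bar>- 2 * (A k)^3 - 3 * A k * B k\<bar> = \<bar>2 * (A k)^3 + 3 * A k * B k\<bar>"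
      by (simp add: abs_minus_commute[of "- 2 * (A k)^3" "3 * A k * B k", symmetric] algebra_simps)
    also have "\<dots> \<le> 2 * (X k * sqrt (X k))" unfolding X_def using B \<open>k \<in> K\<close> by (intro sc_single) auto
    finally show "\<bar>- 2 * (A k)^3 - 3 * A k * B k\<bar> \<le> 2 * (X k * sqrt (X k))" .
  qed
  also have "\<dots> \<le> (\<Sum>k\<in>K. 2 * (X k * sqrt S))"
    using X0 XS by (intro sum_mono mult_left_mono) (auto intro: real_sqrt_le_mono)
  also have "\<dots> = 2 * (S * sqrt S)" by (simp add: S_def sum_distrib_left[symmetric] sum_distrib_right[symmetric])
  also have "\<dots> = 2 * S powr (3/2)" using S0 by (simp add: powr32)
  finally show ?thesis by (simp add: S_def X_def)
qed

lemma cs_sum: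
  fixes A B :: "'k \<Rightarrow> real"
  assumes K: "finite K" and B: "\<forall>k\<in>K. 0 \<le> B k"
  shows "(\<Sum>k\<in>K. A k)^2 \<le> real (card K) * (\<Sum>k\<in>K. (A k)^2 + B k)"
proof -
  have "(\<Sum>k\<in>K. A k)^2 = (\<Sum>k\<in>K. 1 * A k)^2" by simp
  also have "\<dots> \<le> (\<Sum>k\<in>K. 1^2) * (\<Sum>k\<in>K. (A k)^2)"
    by (rule Cauchy_Schwarz_ineq_sum)
  also have "\<dots> = real (card K) * (\<Sum>k\<in>K. (A k)^2)" by simp
  also have "\<dots> \<le> real (card K) * (\<Sum>k\<in>K. (A k)^2 + B k)"
    using B by (intro mult_left_mono sum_mono) auto
  finally show ?thesis .
qed

definition alk :: "(('d::finite \<Rightarrow> 'n::finite) \<Rightarrow> real) \<Rightarrow> real^'n^'d \<Rightarrow> ('d \<Rightarrow> 'n) option \<Rightarrow> real" where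
  "alk C P k = (case k of None \<Rightarrow> rsq C P - x0 C \<bullet> x0 C | Some J \<Rightarrow> C J)"
definition gak :: "('d::finite \<Rightarrow> 'n::finite) option \<Rightarrow> real" where
  "gak k = (case k of None \<Rightarrow> -1 | Some J \<Rightarrow> 0)"
definition bek :: "(('d::finite \<Rightarrow> 'n::finite) \<Rightarrow> real) \<Rightarrow> ('d \<Rightarrow> 'n) option \<Rightarrow> real^'n^'d" where
  "bek C k = (case k of None \<Rightarrow> 2 *\<^sub>R x0 C | Some J \<Rightarrow> - AJ J)"
definition qk :: "(('d::finite \<Rightarrow> 'n::finite) \<Rightarrow> real) \<Rightarrow> real^'n^'d \<Rightarrow> ('d \<Rightarrow> 'n) option \<Rightarrow> real^'n^'d \<Rightarrow> real" where
  "qk C P k x = qq (alk C P k) (gak k) (bek C k) x"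

lemma sumnorm: "(\<Sum>i\<in>UNIV. (norm (v$i))^2) = (norm (v::real^'n::finite^'d::finite))^2"
  by (simp add: norm_vec_def L2_set_def sum_nonneg)

lemma qk_None: "qk C P None x = rsq C P - (norm (x - x0 C))^2"
  by (simp add: qk_def qq_def alk_def gak_def bek_def power2_norm_eq_inner inner_diff_left inner_diff_right
      inner_commute algebra_simps)

lemma qk_Some: "qk C P (Some J) x = Cx C x J"
  by (simp add: qk_def qq_def alk_def gak_def bek_def Cx_AJ inner_commute)

lemma betahat_eq: "betahat C P x = ln (rsq C P) - (\<Sum>k\<in>UNIV. ln (qk C P k x))"
proof -
  have "(\<Sum>i\<in>UNIV. (norm (x$i - x0 C $i))^2) = (norm (x - x0 C))^2"
    using sumnorm[of "x - x0 C"] by simp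
  then show ?thesis
    by (simp add: betahat_def sum_UNIV_option qk_None qk_Some)
qed

lemma gak_le: "gak k \<le> 0" by (simp add: gak_def split: option.splits)

definition Ub :: "(('d::finite \<Rightarrow> 'n::finite) \<Rightarrow> real) \<Rightarrow> real^'n^'d \<Rightarrow> (real^'n^'d) set" where
  "Ub C P = {x. \<forall>k\<in>UNIV. 0 < qk C P k x}"

definition Lrow :: "(real^'n::finite^'d::finite) set" where
  "Lrow = {x. \<forall>i i'. rowsum x i = rowsum x i'}"

lemma D1_eq: "D1 C P = Lrow \<inter> Ub C P"
proof -
  have "(\<forall>k\<in>UNIV. 0 < qk C P k x) \<longleftrightarrow> (\<forall>J. 0 < Cx C x J) \<and> (norm (x - x0 C))^2 < rsq C P" for x
  proof -
    have "(\<forall>k\<in>UNIV. 0 < qk C P k x) \<longleftrightarrow> 0 < qk C P None x \<and> (\<forall>J. 0 < qk C P (Some J) x)"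
      by (metis UNIV_I option.exhaust)
    then show ?thesis by (auto simp: qk_None qk_Some)
  qed
  moreover have "(\<Sum>i\<in>UNIV. (norm (x$i - x0 C $i))^2) = (norm (x - x0 C))^2" for x
    using sumnorm[of "x - x0 C"] by simp
  ultimately show ?thesis
    by (auto simp: D1_def Dom_def Dhat_def Lrow_def Ub_def)
qed

lemma open_Ub: "open (Ub C P)"
proof -
  have "Ub C P = (\<Inter>k\<in>UNIV. {x. 0 < qk C P k x})" by (auto simp: Ub_def)
  also have "open \<dots>"
    by (intro open_INT finite_UNIV ballI open_Collect_less) (auto simp: qk_def qq_def intro!: continuous_intros)
  finally show ?thesis .
qed

lemma convex_Ub: "convex (Ub C P)"
proof (rule convexI)
  fix x y and u v :: real assume xy: "x \<in> Ub C P" "y \<in> Ub C P" and uv: "0 \<le> u" "0 \<le> v" "u + v = 1"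
  show "u *\<^sub>R x + v *\<^sub>R y \<in> Ub C P" unfolding Ub_def
  proof (intro CollectI ballI)
    fix k
    have u: "u = 1 - v" using uv by simp
    have "(1 - v) * qk C P k x + v * qk C P k y \<le> qk C P k ((1 - v) *\<^sub>R x + v *\<^sub>R y)"
      unfolding qk_def by (rule qq_concave) (use gak_le uv in auto)
    moreover have "0 < (1 - v) * qk C P k x + v * qk C P k y"
    proof -
      have "0 < qk C P k x" "0 < qk C P k y" using xy by (auto simp: Ub_def)
      moreover have "0 \<le> 1 - v" "0 \<le> v" "(1 - v) + v = 1" using uv by auto
      ultimately show ?thesis
        by (metis add_pos_nonneg add_nonneg_pos mult_pos_pos mult_nonneg_nonneg less_eq_real_def
            mult_zero_left zero_less_one add.commute add_0 less_le mult_eq_0_iff)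
    qed
    ultimately show "0 < qk C P k (u *\<^sub>R x + v *\<^sub>R y)" unfolding u by simp
  qed
qed

lemma rowsum_lin: "rowsum (u *\<^sub>R x + v *\<^sub>R y) i = u * rowsum x i + v * rowsum y i"
  by (simp add: rowsum_def sum.distrib sum_distrib_left)

lemma affine_Lrow: "affine Lrow"
  unfolding affine_def Lrow_def
proof (intro allI impI ballI CollectI)
  fix x y :: "real^'a^'b" and u v :: real and i i'
  assume "x \<in> {x. \<forall>i i'. rowsum x i = rowsum x i'}" "y \<in> {x. \<forall>i i'. rowsum x i = rowsum x i'}"
  then have "rowsum x i = rowsum x i'" "rowsum y i = rowsum y i'" by auto
  then show "rowsum (u *\<^sub>R x + v *\<^sub>R y) i = rowsum (u *\<^sub>R x + v *\<^sub>R y) i'"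
    by (simp add: rowsum_lin)
qed

lemma convex_Lrow: "convex Lrow"
  by (rule affine_imp_convex[OF affine_Lrow])

lemma closed_Lrow: "closed Lrow"
proof -
  have "Lrow = (\<Inter>i. \<Inter>i'. {x. rowsum x i = rowsum x i'})" by (auto simp: Lrow_def)
  also have "closed \<dots>"
    by (intro closed_INT ballI closed_Collect_eq) (auto simp: rowsum_def intro!: continuous_intros)
  finally show ?thesis .
qed

lemma convex_D1: "convex (D1 C P)"
  unfolding D1_eq by (intro convex_Int convex_Lrow convex_Ub)

lemma affine_hull_D1: "affine hull (D1 C P) \<subseteq> Lrow"
  by (rule hull_minimal) (auto simp: D1_eq affine_Lrow)

lemma openin_D1: "openin (top_of_set (affine hull (D1 C P))) (D1 C P)"
proof -
  have "D1 C P = affine hull (D1 C P) \<inter> Ub C P"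
    using affine_hull_D1[of C P] hull_subset[of "D1 C P" affine] by (auto simp: D1_eq)
  then show ?thesis by (metis openin_open_Int open_Ub)
qed

lemma betahat_fun: "betahat C P = (\<lambda>x. ln (rsq C P) - (\<Sum>k\<in>UNIV. ln (qq (alk C P k) (gak k) (bek C k) x)))"
  by (rule ext) (simp add: betahat_eq qk_def)

lemma C3_betahat:
  fixes C :: "('d::finite \<Rightarrow> 'n::finite) \<Rightarrow> real" and P :: "real^'n^'d"
  shows "C3_on (D1 C P) (betahat C P)"
proof -
  obtain f1 f2 f3 where F:
    "\<forall>x\<in>Ub C P. ((\<lambda>x. ln (rsq C P) - (\<Sum>k\<in>UNIV. ln (qq (alk C P k) (gak k) (bek C k) x))) has_derivative blinfun_apply (f1 x)) (at x)
           \<and> (f1 has_derivative blinfun_apply (f2 x)) (at x)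
           \<and> (f2 has_derivative blinfun_apply (f3 x)) (at x)"
    "continuous_on (Ub C P) f3"
    using C3_logsum[of "UNIV::('d\<Rightarrow>'n) option set" "alk C P" gak "bek C" "ln (rsq C P)"]
    by (auto simp: Ub_def qk_def)
  have sub: "D1 C P \<subseteq> Ub C P" by (auto simp: D1_eq)
  have F': "\<forall>x\<in>Ub C P. (betahat C P has_derivative blinfun_apply (f1 x)) (at x)
           \<and> (f1 has_derivative blinfun_apply (f2 x)) (at x)
           \<and> (f2 has_derivative blinfun_apply (f3 x)) (at x)"
    using F(1) by (simp only: betahat_fun)
  show ?thesis unfolding C3_on_def
    by (rule exI[of _ f1], rule exI[of _ f2], rule exI[of _ f3])
       (use F' F(2) sub in \<open>auto intro: has_derivative_at_withinI continuous_on_subset\<close>)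
qed

lemma convex_betahat:
  fixes C :: "('d::finite \<Rightarrow> 'n::finite) \<Rightarrow> real" and P :: "real^'n^'d"
  shows "convex_on (D1 C P) (betahat C P)"
proof -
  have sub: "D1 C P \<subseteq> Ub C P" by (auto simp: D1_eq)
  have "convex_on (D1 C P) (\<lambda>x. ln (rsq C P) + (\<Sum>k\<in>UNIV. - ln (qq (alk C P k) (gak k) (bek C k) x)))"
  proof (rule convex_on_add)
    show "convex_on (D1 C P) (\<lambda>x. ln (rsq C P))" by (simp add: convex_on_const convex_D1)
    show "convex_on (D1 C P) (\<lambda>x. \<Sum>k\<in>UNIV. - ln (qq (alk C P k) (gak k) (bek C k) x))"
    proof (rule convex_on_sum_fun[OF _ convex_D1])
      show "finite (UNIV :: ('d \<Rightarrow> 'n) option set)" by simp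
      fix k :: "('d \<Rightarrow> 'n) option"
      show "convex_on (D1 C P) (\<lambda>x. - ln (qq (alk C P k) (gak k) (bek C k) x))"
        by (rule neg_ln_qq_convex[OF convex_D1]) (use sub gak_le in \<open>auto simp: Ub_def qk_def\<close>)
    qed
  qed
  moreover have "betahat C P = (\<lambda>x. ln (rsq C P) + (\<Sum>k\<in>UNIV. - ln (qq (alk C P k) (gak k) (bek C k) x)))"
    by (simp add: betahat_fun sum_negf)
  ultimately show ?thesis by simp
qed

lemma qq_line: "qq \<alpha> \<gamma> \<beta> (x + t *\<^sub>R u) = qq \<alpha> \<gamma> \<beta> x + gl \<gamma> \<beta> x u * t + (\<gamma> * (u \<bullet> u)) * t^2"
  by (simp add: qq_def gl_def inner_add_left inner_add_right inner_commute power2_eq_square algebra_simps)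

lemma dderiv_betahat:
  fixes C :: "('d::finite \<Rightarrow> 'n::finite) \<Rightarrow> real" and P x u :: "real^'n^'d"
  assumes x: "x \<in> Ub C P"
  defines "a \<equiv> \<lambda>k. qk C P k x" and "b \<equiv> \<lambda>k. gl (gak k) (bek C k) x u" and "c \<equiv> \<lambda>k::('d \<Rightarrow> 'n) option. gak k * (u \<bullet> u)"
  shows "dderiv 1 (betahat C P) x u = - (\<Sum>k\<in>UNIV. b k / a k)"
    "dderiv 2 (betahat C P) x u = - (\<Sum>k\<in>UNIV. (2 * c k * a k - (b k)^2) / (a k)^2)"
    "dderiv 3 (betahat C P) x u = - (\<Sum>k\<in>UNIV. (2 * (b k)^3 - 6 * c k * b k * a k) / (a k)^3)"
proof -
  have fe: "(\<lambda>t. betahat C P (x + t *\<^sub>R u)) = (\<lambda>t. ln (rsq C P) - (\<Sum>k\<in>UNIV. ln (a k + b k * t + c k * t^2)))"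
    by (rule ext) (simp add: betahat_eq qk_def qq_line a_def b_def c_def)
  have apos: "\<forall>k\<in>UNIV. 0 < a k" using x by (simp add: Ub_def a_def)
  have fin: "finite (UNIV :: ('d \<Rightarrow> 'n) option set)" by simp
  note r = dderiv_logsum[OF fin apos, where b=b and c=c and \<kappa>="ln (rsq C P)"]
  show "dderiv 1 (betahat C P) x u = - (\<Sum>k\<in>UNIV. b k / a k)"
    unfolding dderiv_def fe by (rule r(1))
  show "dderiv 2 (betahat C P) x u = - (\<Sum>k\<in>UNIV. (2 * c k * a k - (b k)^2) / (a k)^2)"
    unfolding dderiv_def fe by (rule r(2))
  show "dderiv 3 (betahat C P) x u = - (\<Sum>k\<in>UNIV. (2 * (b k)^3 - 6 * c k * b k * a k) / (a k)^3)"
    unfolding dderiv_def fe by (rule r(3))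
qed

lemma sc_theta_betahat:
  fixes C :: "('d::finite \<Rightarrow> 'n::finite) \<Rightarrow> real" and P x u :: "real^'n^'d"
  assumes x: "x \<in> Ub C P"
  shows "\<bar>dderiv 3 (betahat C P) x u\<bar> \<le> 2 * 1 powr (-1/2) * (dderiv 2 (betahat C P) x u) powr (3/2)"
    "(dderiv 1 (betahat C P) x u)^2 \<le> (real (CARD('n) ^ CARD('d)) + 1) * 1 * dderiv 2 (betahat C P) x u"
proof -
  define a where "a = (\<lambda>k. qk C P k x)"
  define b where "b = (\<lambda>k. gl (gak k) (bek C k) x u)"
  define c where "c = (\<lambda>k::('d \<Rightarrow> 'n) option. gak k * (u \<bullet> u))"
  note dd0 = dderiv_betahat[OF x, of u]
  have dd: "dderiv 1 (betahat C P) x u = - (\<Sum>k\<in>UNIV. b k / a k)"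
    "dderiv 2 (betahat C P) x u = - (\<Sum>k\<in>UNIV. (2 * c k * a k - (b k)^2) / (a k)^2)"
    "dderiv 3 (betahat C P) x u = - (\<Sum>k\<in>UNIV. (2 * (b k)^3 - 6 * c k * b k * a k) / (a k)^3)"
    using dd0 by (simp_all only: a_def b_def c_def)
  have fin: "finite (UNIV :: ('d \<Rightarrow> 'n) option set)" by simp
  have apos: "0 < a k" for k :: "('d \<Rightarrow> 'n) option" using x by (simp add: Ub_def a_def)
  define A where "A k = b k / a k" for k :: "('d \<Rightarrow> 'n) option"
  define B where "B k = - 2 * c k / a k" for k :: "('d \<Rightarrow> 'n) option"
  have B0: "\<forall>k\<in>UNIV. 0 \<le> B k"
  proof
    fix k
    have "c k \<le> 0" using gak_le[of k] by (simp add: c_def mult_nonpos_nonneg)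
    then show "0 \<le> B k" using apos[of k] by (simp add: B_def divide_nonpos_pos)
  qed
  have d1: "dderiv 1 (betahat C P) x u = - (\<Sum>k\<in>UNIV. A k)"
    using dd(1) by (simp add: A_def)
  have d2: "dderiv 2 (betahat C P) x u = (\<Sum>k\<in>UNIV. (A k)^2 + B k)"
  proof -
    have "- ((2 * c k * a k - (b k)^2) / (a k)^2) = (A k)^2 + B k" for k
      using apos[of k] by (simp add: A_def B_def field_simps power2_eq_square)
    then show ?thesis using dd(2) by (simp add: sum_negf[symmetric])
  qed
  have d3: "dderiv 3 (betahat C P) x u = (\<Sum>k\<in>UNIV. - 2 * (A k)^3 - 3 * A k * B k)"
  proof -
    have "- ((2 * (b k)^3 - 6 * c k * b k * a k) / (a k)^3) = - 2 * (A k)^3 - 3 * A k * B k" for k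
      using apos[of k] by (simp add: A_def B_def field_simps power3_eq_cube)
    then show ?thesis using dd(3) by (simp add: sum_negf[symmetric])
  qed
  show "\<bar>dderiv 3 (betahat C P) x u\<bar> \<le> 2 * 1 powr (-1/2) * (dderiv 2 (betahat C P) x u) powr (3/2)"
    unfolding d3 d2 using sc_sum[OF fin B0, of A] by simp
  have card: "real (card (UNIV :: ('d \<Rightarrow> 'n) option set)) = real (CARD('n) ^ CARD('d)) + 1"
    by (simp add: card_option card_fun)
  show "(dderiv 1 (betahat C P) x u)^2 \<le> (real (CARD('n) ^ CARD('d)) + 1) * 1 * dderiv 2 (betahat C P) x u"
    unfolding d1 d2 using cs_sum[OF fin B0, of A] card by (simp add: add.commute)
qed

lemma rsq_gt1:
  fixes C :: "('d::finite \<Rightarrow> 'n::finite) \<Rightarrow> real" and P :: "real^'n^'d"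
  assumes n2: "CARD('n) \<ge> 2" and d2: "CARD('d) \<ge> 2"
    and prob: "\<forall>i. prob_vec (P$i)" and Ppos: "\<forall>i j. 0 < P$i$j"
  shows "1 < rsq C P"
proof -
  have pp: "0 < pmin P" "pmin P \<le> 1/4" using pmin_facts[OF n2 d2 prob Ppos] by auto
  have "(pmin P)^2 \<le> (1/4)^2" using pp by (intro power_mono) auto
  then have p2: "(pmin P)^2 < 1" by (simp add: power2_eq_square)
  have "1 * 1 \<le> (9 * (cmax C)^2 + 1) * real CARD('n)"
    by (intro mult_mono) (use n2 in auto)
  moreover have "0 < (pmin P)^2" using pp by simp
  ultimately show ?thesis unfolding rsq_def using p2 by (simp add: less_divide_eq)
qed

lemma norm_AJ: "norm (AJ (J :: 'd::finite \<Rightarrow> 'n::finite)) = sqrt (real CARD('d))"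
proof -
  have "inner (AJ J) (AJ J) = real CARD('d)" unfolding inner_AJ by (simp add: AJ_def)
  then show ?thesis by (simp add: norm_eq_sqrt_inner)
qed

lemma near_x0_in_D1:
  fixes C :: "('d::finite \<Rightarrow> 'n::finite) \<Rightarrow> real" and P z :: "real^'n^'d"
  assumes r1: "1 < rsq C P" and z: "z \<in> Lrow" "dist z (x0 C) < 1 / sqrt (real CARD('d))"
  shows "z \<in> D1 C P"
proof -
  define dd where "dd = real CARD('d)"
  have dd1: "1 \<le> dd" by (simp add: dd_def)
  have nz: "norm (z - x0 C) < 1 / sqrt dd" using z(2) by (simp add: dist_norm dd_def)
  have "\<forall>J. 0 < Cx C z J"
  proof
    fix J
    have "Cx C z J = Cx C (x0 C) J - inner (z - x0 C) (AJ J)"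
      by (simp add: Cx_AJ inner_diff_left)
    moreover have "1 \<le> Cx C (x0 C) J" using cmin_le[of C J] by (simp add: Cx_x0)
    moreover have "inner (z - x0 C) (AJ J) < 1"
    proof -
      have "inner (z - x0 C) (AJ J) \<le> norm (z - x0 C) * norm (AJ J)" by (rule norm_cauchy_schwarz)
      also have "\<dots> = norm (z - x0 C) * sqrt dd" by (simp add: norm_AJ dd_def)
      also have "\<dots> < (1 / sqrt dd) * sqrt dd" using nz dd1 by (intro mult_strict_right_mono) auto
      also have "\<dots> = 1" using dd1 by simp
      finally show ?thesis .
    qed
    ultimately show "0 < Cx C z J" by simp
  qed
  moreover have "(norm (z - x0 C))^2 < rsq C P"
  proof -
    have "1 / sqrt dd \<le> 1" using dd1 by simp
    then have "norm (z - x0 C) < 1" using nz by simp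
    then have "(norm (z - x0 C))^2 < 1" by (simp add: power_less_one_iff abs_square_less_1)
    then show ?thesis using r1 by simp
  qed
  ultimately have "z \<in> Ub C P"
    unfolding Ub_def
  proof (intro CollectI ballI)
    fix k :: "('d \<Rightarrow> 'n) option"
    assume "\<forall>J. 0 < Cx C z J" "(norm (z - x0 C))^2 < rsq C P"
    then show "0 < qk C P k z" by (cases k) (auto simp: qk_None qk_Some)
  qed
  with z(1) show ?thesis by (simp add: D1_eq)
qed

lemma closure_D1: "closure (D1 C P) \<subseteq> Lrow"
  by (rule closure_minimal) (auto simp: D1_eq closed_Lrow)

lemma part_f:
  fixes C :: "('d::finite \<Rightarrow> 'n::finite) \<Rightarrow> real" and P :: "real^'n^'d"
  assumes r1: "1 < rsq C P"
  shows "\<forall>y\<in>rel_frontier (D1 C P). dist y (x0 C) \<ge> 1 / sqrt (real CARD('d))"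
proof (rule ballI, rule ccontr)
  fix y assume y: "y \<in> rel_frontier (D1 C P)" and "\<not> 1 / sqrt (real CARD('d)) \<le> dist y (x0 C)"
  then have yd: "dist y (x0 C) < 1 / sqrt (real CARD('d))" by simp
  have ycl: "y \<in> closure (D1 C P)" and ynr: "y \<notin> rel_interior (D1 C P)"
    using y by (auto simp: rel_frontier_def)
  have yL: "y \<in> Lrow" using ycl closure_D1 by blast
  have yD: "y \<in> D1 C P" by (rule near_x0_in_D1[OF r1 yL yd])
  define e where "e = 1 / sqrt (real CARD('d)) - dist y (x0 C)"
  have e0: "0 < e" using yd by (simp add: e_def)
  have "ball y e \<inter> affine hull (D1 C P) \<subseteq> D1 C P"
  proof
    fix z assume z: "z \<in> ball y e \<inter> affine hull (D1 C P)"
    then have zL: "z \<in> Lrow" using affine_hull_D1 by blast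
    have "dist z (x0 C) \<le> dist z y + dist y (x0 C)" by (rule dist_triangle)
    also have "\<dots> < e + dist y (x0 C)" using z by (simp add: dist_commute)
    finally have "dist z (x0 C) < 1 / sqrt (real CARD('d))" by (simp add: e_def)
    then show "z \<in> D1 C P" by (rule near_x0_in_D1[OF r1 zL])
  qed
  then have "y \<in> rel_interior (D1 C P)" using yD e0 by (auto simp: mem_rel_interior_ball)
  with ynr show False by simp
qed

lemma frontier_zero:
  fixes C :: "('d::finite \<Rightarrow> 'n::finite) \<Rightarrow> real" and P y :: "real^'n^'d"
  assumes y: "y \<in> rel_frontier (D1 C P)"
  shows "\<exists>k. qk C P k y \<le> 0"
proof (rule ccontr)
  assume "\<not> (\<exists>k. qk C P k y \<le> 0)"
  then have yU: "y \<in> Ub C P" by (auto simp: Ub_def not_le)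
  have ycl: "y \<in> closure (D1 C P)" and ynr: "y \<notin> rel_interior (D1 C P)"
    using y by (auto simp: rel_frontier_def)
  have yL: "y \<in> Lrow" using ycl closure_D1 by blast
  obtain e where e: "0 < e" "ball y e \<subseteq> Ub C P" using open_Ub yU open_contains_ball by blast
  have "ball y e \<inter> affine hull (D1 C P) \<subseteq> D1 C P"
    using e(2) affine_hull_D1[of C P] by (auto simp: D1_eq)
  moreover have "y \<in> D1 C P" using yU yL by (simp add: D1_eq)
  ultimately have "y \<in> rel_interior (D1 C P)" using e(1) by (auto simp: mem_rel_interior_ball)
  with ynr show False by simp
qed

lemma filterlim_betahat:
  fixes C :: "('d::finite \<Rightarrow> 'n::finite) \<Rightarrow> real" and P y :: "real^'n^'d"
  assumes y: "y \<in> rel_frontier (D1 C P)"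
  shows "filterlim (betahat C P) at_top (at y within D1 C P)"
proof -
  obtain k0 where k0: "qk C P k0 y \<le> 0" using frontier_zero[OF y] by blast
  define F where "F = at y within D1 C P"
  have tend: "((\<lambda>x. qk C P k x) \<longlongrightarrow> qk C P k y) F" for k
    unfolding F_def qk_def qq_def by (intro tendsto_intros)
  have evD: "eventually (\<lambda>x. x \<in> D1 C P) F" unfolding F_def by (simp add: eventually_at_filter)
  define R where "R = (UNIV :: ('d \<Rightarrow> 'n) option set) - {k0}"
  define W where "W = (\<Sum>k\<in>R. ln (qk C P k y + 1))"
  have evR: "eventually (\<lambda>x. \<forall>k\<in>R. qk C P k x < qk C P k y + 1) F"
    by (intro eventually_ball_finite) (auto simp: R_def intro: order_tendstoD(2)[OF tend])
  show ?thesis unfolding F_def[symmetric]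
  proof (subst filterlim_at_top, intro allI)
    fix Z
    define \<epsilon> where "\<epsilon> = exp (ln (rsq C P) - Z - W)"
    have e0: "0 < \<epsilon>" by (simp add: \<epsilon>_def)
    have ev0: "eventually (\<lambda>x. qk C P k0 x < \<epsilon>) F"
      by (rule order_tendstoD(2)[OF tend]) (use k0 e0 in simp)
    show "eventually (\<lambda>x. Z \<le> betahat C P x) F"
      using evD evR ev0
    proof eventually_elim
      case (elim x)
      have pos: "0 < qk C P k x" for k using elim(1) by (simp add: D1_eq Ub_def)
      have split: "(\<Sum>k\<in>UNIV. ln (qk C P k x)) = ln (qk C P k0 x) + (\<Sum>k\<in>R. ln (qk C P k x))"
        unfolding R_def by (subst sum.remove[of UNIV k0]) auto
      have restle: "(\<Sum>k\<in>R. ln (qk C P k x)) \<le> W"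
        unfolding W_def
      proof (rule sum_mono)
        fix k assume "k \<in> R"
        then have "qk C P k x < qk C P k y + 1" using elim(2) by blast
        then show "ln (qk C P k x) \<le> ln (qk C P k y + 1)" using pos[of k] by simp
      qed
      have "ln (qk C P k0 x) < ln \<epsilon>" using elim(3) pos[of k0] e0 by simp
      then have "ln (qk C P k0 x) < ln (rsq C P) - Z - W" by (simp add: \<epsilon>_def)
      then show "Z \<le> betahat C P x" using restle by (simp add: betahat_eq split)
    qed
  qed
qed

lemma theta_betahat:
  fixes C :: "('d::finite \<Rightarrow> 'n::finite) \<Rightarrow> real" and P :: "real^'n^'d"
  shows "theta 1 (betahat C P) (D1 C P) \<le> ereal (real (CARD('n) ^ CARD('d)) + 1)"
  unfolding theta_def
proof (rule SUP_least)
  fix x assume x: "x \<in> D1 C P"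
  then have xU: "x \<in> Ub C P" by (simp add: D1_eq)
  define N where "N = real (CARD('n) ^ CARD('d)) + 1"
  have "ereal N \<in> {ereal s |s. 0 \<le> s \<and> (\<forall>u\<in>dirs (D1 C P). (dderiv 1 (betahat C P) x u)^2 \<le> s * 1 * dderiv 2 (betahat C P) x u)}"
  proof -
    have "0 \<le> N" by (simp add: N_def)
    moreover have "\<forall>u\<in>dirs (D1 C P). (dderiv 1 (betahat C P) x u)^2 \<le> N * 1 * dderiv 2 (betahat C P) x u"
      using sc_theta_betahat(2)[OF xU] by (simp add: N_def)
    ultimately show ?thesis by blast
  qed
  then show "Inf {ereal s |s. 0 \<le> s \<and> (\<forall>u\<in>dirs (D1 C P). (dderiv 1 (betahat C P) x u)^2 \<le> s * 1 * dderiv 2 (betahat C P) x u)}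
      \<le> ereal (real (CARD('n) ^ CARD('d)) + 1)"
    unfolding N_def by (rule Inf_lower)
qed

lemma part_g:
  fixes C :: "('d::finite \<Rightarrow> 'n::finite) \<Rightarrow> real" and P :: "real^'n^'d"
  assumes n2: "CARD('n) \<ge> 2" and d2: "CARD('d) \<ge> 2"
    and prob: "\<forall>i. prob_vec (P$i)" and Ppos: "\<forall>i j. 0 < P$i$j"
  shows "barrier 1 (betahat C P) (D1 C P)
           \<and> theta 1 (betahat C P) (D1 C P) \<le> ereal (real (CARD('n) ^ CARD('d)) + 1)"
proof -
  have th: "theta 1 (betahat C P) (D1 C P) \<le> ereal (real (CARD('n) ^ CARD('d)) + 1)"
    by (rule theta_betahat)
  have sc: "self_concordant 1 (betahat C P) (D1 C P)"
    unfolding self_concordant_def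
  proof (intro conjI ballI)
    show "(0::real) < 1" by simp
    show "convex (D1 C P)" by (rule convex_D1)
    show "openin (top_of_set (affine hull D1 C P)) (D1 C P)" by (rule openin_D1)
    show "convex_on (D1 C P) (betahat C P)" by (rule convex_betahat)
    show "C3_on (D1 C P) (betahat C P)" by (rule C3_betahat)
    fix x u assume x: "x \<in> D1 C P"
    then have xU: "x \<in> Ub C P" by (simp add: D1_eq)
    show "\<bar>dderiv 3 (betahat C P) x u\<bar> \<le> 2 * 1 powr (-1/2) * (dderiv 2 (betahat C P) x u) powr (3/2)"
      by (rule sc_theta_betahat(1)[OF xU])
  qed
  have ssc: "strongly_self_concordant 1 (betahat C P) (D1 C P)"
    unfolding strongly_self_concordant_def using sc filterlim_betahat by blast
  have "ereal (real (CARD('n) ^ CARD('d)) + 1) < \<infinity>" by simp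
  with th have "theta 1 (betahat C P) (D1 C P) < \<infinity>" by (rule le_less_trans)
  then show ?thesis using ssc th by (simp add: barrier_def)
qed

theorem lemma3p2:
  fixes C :: "('d::finite \<Rightarrow> 'n::finite) \<Rightarrow> real" and P :: "real^'n^'d"
  assumes "CARD('n) \<ge> 2" and "CARD('d) \<ge> 2" and "C \<noteq> (\<lambda>_. 0)"
    and "\<forall>i. prob_vec (P$i)"
  shows "\<comment> \<open>(a)\<close>
         tau C P \<ge> cmin C
       \<and> \<comment> \<open>(b)\<close>
         ((\<exists>y. (\<forall>J. 0 \<le> Cx C y J) \<and> objective P y = tau C P)
          \<and> (\<forall>y. (\<forall>J. 0 \<le> Cx C y J) \<longrightarrow> objective P y \<le> tau C P))
       \<and> tau C P = (SUP y\<in>Dhat C. objective P y)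
       \<and> tau C P = (SUP y\<in>Dom C. objective P y)
       \<and> \<comment> \<open>(c)\<close>
         (\<forall>x. (\<forall>i j. 0 < P$i$j) \<and> (\<forall>J. 0 \<le> Cx C x J) \<and> objective P x \<ge> cmin C
              \<and> (\<forall>i i'. rowsum x i = rowsum x i')
           \<longrightarrow> sqrt (\<Sum>i\<in>UNIV. (norm (x$i))^2) < 2 * cmax C * sqrt (real CARD('n)) / pmin P)
       \<and> \<comment> \<open>(d)\<close>
         x0 C \<in> Dom C
       \<and> \<comment> \<open>(e)\<close>
         (\<forall>x. (\<forall>i j. 0 < P$i$j) \<and> (\<forall>J. 0 \<le> Cx C x J) \<and> objective P x \<ge> cmin C
              \<and> (\<forall>i i'. rowsum x i = rowsum x i')
           \<longrightarrow> (\<Sum>i\<in>UNIV. (norm (x$i - x0 C $i))^2) < rsq C P)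
       \<and> \<comment> \<open>(f)\<close>
         ((\<forall>i j. 0 < P$i$j) \<longrightarrow>
           (\<forall>y\<in>rel_frontier (D1 C P). dist y (x0 C) \<ge> 1 / sqrt (real CARD('d))))
       \<and> \<comment> \<open>(g)\<close>
         ((\<forall>i j. 0 < P$i$j) \<longrightarrow>
           barrier 1 (betahat C P) (D1 C P)
           \<and> theta 1 (betahat C P) (D1 C P) \<le> ereal (real (CARD('n) ^ CARD('d)) + 1))"
proof -
  have a: "tau C P \<ge> cmin C" by (rule part_a[OF assms(4)])
  have b: "((\<exists>y. (\<forall>J. 0 \<le> Cx C y J) \<and> objective P y = tau C P)
          \<and> (\<forall>y. (\<forall>J. 0 \<le> Cx C y J) \<longrightarrow> objective P y \<le> tau C P))
       \<and> tau C P = (SUP y\<in>Dhat C. objective P y)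
       \<and> tau C P = (SUP y\<in>Dom C. objective P y)" by (rule part_b[OF assms(4)])
  have c: "\<forall>x. (\<forall>i j. 0 < P$i$j) \<and> (\<forall>J. 0 \<le> Cx C x J) \<and> objective P x \<ge> cmin C
              \<and> (\<forall>i i'. rowsum x i = rowsum x i')
           \<longrightarrow> sqrt (\<Sum>i\<in>UNIV. (norm (x$i))^2) < 2 * cmax C * sqrt (real CARD('n)) / pmin P"
    using part_c[OF assms(1-4)] by blast
  have d: "x0 C \<in> Dom C" by (rule part_d)
  have e: "\<forall>x. (\<forall>i j. 0 < P$i$j) \<and> (\<forall>J. 0 \<le> Cx C x J) \<and> objective P x \<ge> cmin C
              \<and> (\<forall>i i'. rowsum x i = rowsum x i')
           \<longrightarrow> (\<Sum>i\<in>UNIV. (norm (x$i - x0 C $i))^2) < rsq C P"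
    using part_e[OF assms(1-4)] by blast
  have f: "(\<forall>i j. 0 < P$i$j) \<longrightarrow>
           (\<forall>y\<in>rel_frontier (D1 C P). dist y (x0 C) \<ge> 1 / sqrt (real CARD('d)))"
    using part_f rsq_gt1[OF assms(1,2,4)] by blast
  have g: "(\<forall>i j. 0 < P$i$j) \<longrightarrow>
           barrier 1 (betahat C P) (D1 C P)
           \<and> theta 1 (betahat C P) (D1 C P) \<le> ereal (real (CARD('n) ^ CARD('d)) + 1)"
    using part_g[OF assms(1,2,4)] by blast
  show ?thesis using a b c d e f g by (intro conjI) blast+
qed

end
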